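(* Suppose the empirical measures $\mathbb P_t$ converge weakly to an absolutely continuous probability measure $\mathbb P$ on $\mathcal S$. Then for every $\pi\in\mathcal{FG}$ the asymptotic growth rate $W(\pi)=\lim_{t\to\infty}\frac1t\log V_\pi(t)$ exists and $W(\pi)=\lim_{t\to\infty}\int_{\mathcal S}\ell_\pi\,d\mathbb P_t=\int_{\mathcal S}\ell_\pi\,d\mathbb P$.
   Context: $n\ge2$; $\Delta_n$, $\overline{\Delta}_n$ open and closed unit simplices in $\mathbb R^n$. Market: $\{\mu(t)\}_{t\ge0}\subset\Delta_n$ with a constant $M>0$ such that $\frac1M\le\mu_i(t+1)/\mu_i(t)\le M$ for all $i,t$; $\mathcal S=\{(p,q)\in\Delta_n\times\Delta_n:\frac1M\le q_i/p_i\le M\ \forall i\}$. Relative value: $V_\pi(0)=1$, $V_\pi(t+1)=V_\pi(t)\sum_i\pi_i(\mu(t))\mu_i(t+1)/\mu_i(t)$. $\mathbb P_t=\frac1t\sum_{s=0}^{t-1}\delta_{(\mu(s),\mu(s+1))}$; $\ell_\pi(p,q)=\log\left(\sum_i\pi_i(p)q_i/p_i\right)$. Absolute continuity is with respect to Lebesgue measure. $\mathcal{FG}$ is the set of maps $\pi:\Delta_n\to\overline{\Delta}_n$ for which there is a concave $\Phi:\Delta_n\to(0,\infty)$ with $\sum_i\pi_i(p)\frac{q_i}{p_i}\ge\frac{\Phi(q)}{\Phi(p)}$ for all $p,q$. *)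

theory Defs
  imports "HOL-Probability.Probability"
begin

definition open_simplex :: "(real ^ 'n) set" where
  "open_simplex = {p. (\<forall>i. p $ i > 0) \<and> (\<Sum>i\<in>UNIV. p $ i) = 1}"

definition closed_simplex :: "(real ^ 'n) set" where
  "closed_simplex = {p. (\<forall>i. p $ i \<ge> 0) \<and> (\<Sum>i\<in>UNIV. p $ i) = 1}"

definition S_set :: "real \<Rightarrow> ((real ^ 'n) \<times> (real ^ 'n)) set" where
  "S_set M = {(p, q). p \<in> open_simplex \<and> q \<in> open_simplex \<and>
                (\<forall>i. 1 / M \<le> q $ i / p $ i \<and> q $ i / p $ i \<le> M)}"

primrec rel_value :: "(real ^ 'n \<Rightarrow> real ^ 'n) \<Rightarrow> (nat \<Rightarrow> real ^ 'n) \<Rightarrow> nat \<Rightarrow> real" where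
  "rel_value \<pi> \<mu> 0 = 1"
| "rel_value \<pi> \<mu> (Suc t) =
     rel_value \<pi> \<mu> t * (\<Sum>i\<in>UNIV. \<pi> (\<mu> t) $ i * \<mu> (Suc t) $ i / \<mu> t $ i)"

definition ell :: "(real ^ 'n \<Rightarrow> real ^ 'n) \<Rightarrow> (real ^ 'n) \<times> (real ^ 'n) \<Rightarrow> real" where
  "ell \<pi> x = ln (\<Sum>i\<in>UNIV. \<pi> (fst x) $ i * snd x $ i / fst x $ i)"

definition emp_measure :: "(nat \<Rightarrow> real ^ 'n) \<Rightarrow> nat \<Rightarrow> ((real ^ 'n) \<times> (real ^ 'n)) measure" where
  "emp_measure \<mu> t = measure_pmf (map_pmf (\<lambda>s. (\<mu> s, \<mu> (Suc s))) (pmf_of_set {..<t}))"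

definition weak_conv_on :: "'a::metric_space set \<Rightarrow> (nat \<Rightarrow> 'a measure) \<Rightarrow> 'a measure \<Rightarrow> bool" where
  "weak_conv_on S Pt P \<longleftrightarrow>
     (\<forall>f :: 'a \<Rightarrow> real. continuous_on S f \<and> bounded (f ` S) \<longrightarrow>
        (\<lambda>t. set_lebesgue_integral (Pt t) S f) \<longlonglongrightarrow> set_lebesgue_integral P S f)"

text \<open>Absolute continuity w.r.t. Lebesgue measure on (the affine hull of) the product of
  simplices, of dimension 2(n-1). A Borel set A inside Delta x Delta is Lebesgue-null in this
  sense iff its thickening along the all-ones directions,
  {(p + s 1, q + r 1) : (p,q) in A, s,r in [0,1]}, is Lebesgue-null in R^(2n).\<close>
definition ones_vec :: "real ^ 'n" where
  "ones_vec = (\<chi> i. 1)"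

definition thicken :: "((real ^ 'n) \<times> (real ^ 'n)) set \<Rightarrow> ((real ^ 'n) \<times> (real ^ 'n)) set" where
  "thicken A = (\<lambda>((p, q), (s, r)). (p + s *\<^sub>R ones_vec, q + r *\<^sub>R ones_vec)) `
                  (A \<times> ({0..1} \<times> {0..1}))"

definition simplex_abs_cont :: "((real ^ 'n) \<times> (real ^ 'n)) measure \<Rightarrow> bool" where
  "simplex_abs_cont P \<longleftrightarrow>
     (\<forall>A \<in> sets borel. A \<subseteq> open_simplex \<times> open_simplex \<longrightarrow>
        thicken A \<in> null_sets lebesgue \<longrightarrow> emeasure P A = 0)"

definition FG :: "(real ^ 'n \<Rightarrow> real ^ 'n) set" where
  "FG = {\<pi>. (\<forall>p\<in>open_simplex. \<pi> p \<in> closed_simplex) \<and>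
            (\<exists>\<Phi>. concave_on open_simplex \<Phi> \<and> (\<forall>p\<in>open_simplex. \<Phi> p > 0) \<and>
               (\<forall>p\<in>open_simplex. \<forall>q\<in>open_simplex.
                  (\<Sum>i\<in>UNIV. \<pi> p $ i * q $ i / p $ i) \<ge> \<Phi> q / \<Phi> p))}"

end

theory Submission
  imports Defs
begin


lemma upper_approx:
  fixes f :: "'a::metric_space \<Rightarrow> real"
  assumes Sne: "S \<noteq> {}" and bnd: "\<And>x. x \<in> S \<Longrightarrow> \<bar>f x\<bar> \<le> C"
  defines "F \<equiv> \<lambda>(k::nat) x. (SUP y\<in>S. f y - real k * dist x y)"
  shows "\<And>k. continuous_on S (F k)"
    and "\<And>k x. x \<in> S \<Longrightarrow> f x \<le> F k x \<and> F k x \<le> C"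
    and "\<And>x. x \<in> S \<Longrightarrow> continuous (at x within S) f \<Longrightarrow> (\<lambda>k. F k x) \<longlonglongrightarrow> f x"
proof -
  have bnd1: "f y - real k * dist x y \<le> C" if "y \<in> S" for k x y
  proof -
    have "f y \<le> C" using bnd[OF that] by auto
    moreover have "real k * dist x y \<ge> 0" by simp
    ultimately show ?thesis by linarith
  qed
  have bdd: "bdd_above ((\<lambda>y. f y - real k * dist x y) ` S)" for k x
    by (rule bdd_aboveI2[where M=C]) (use bnd1 in auto)
  have up: "y \<in> S \<Longrightarrow> f y - real k * dist x y \<le> F k x" for k x y
    unfolding F_def by (rule cSUP_upper[OF _ bdd]) auto
  have leC: "F k x \<le> C" for k x
    unfolding F_def
  proof (rule cSUP_least[OF Sne])
    fix y assume "y \<in> S"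
    then show "f y - real k * dist x y \<le> C" by (rule bnd1)
  qed
  have lip: "F k x \<le> F k x' + real k * dist x x'" for k x x'
  proof -
    have "(SUP y\<in>S. f y - real k * dist x y) \<le> F k x' + real k * dist x x'"
    proof (rule cSUP_least[OF Sne])
      fix y assume "y \<in> S"
      have "dist x' y \<le> dist x y + dist x x'" by (metis dist_commute dist_triangle)
      then have "real k * dist x' y \<le> real k * dist x y + real k * dist x x'"
        by (metis distrib_left mult_left_mono of_nat_0_le_iff)
      moreover have "f y - real k * dist x' y \<le> F k x'" using up[OF \<open>y \<in> S\<close>] .
      ultimately show "f y - real k * dist x y \<le> F k x' + real k * dist x x'" by linarith
    qed
    then show ?thesis by (simp add: F_def)
  qed
  show "continuous_on S (F k)" for k
  proof (rule continuous_onI)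
    fix x e assume "x \<in> S" "(0::real) < e"
    show "\<exists>d>0. \<forall>x'\<in>S. dist x' x < d \<longrightarrow> dist (F k x') (F k x) \<le> e"
    proof (intro exI[of _ "e / (real k + 1)"] conjI ballI impI)
      show "0 < e / (real k + 1)" using \<open>0 < e\<close> by simp
      fix x' assume "x' \<in> S" "dist x' x < e / (real k + 1)"
      then have "real k * dist x' x \<le> e"
        using \<open>0 < e\<close> by (simp add: field_simps) (smt (verit) mult_left_mono of_nat_0_le_iff zero_le_dist)
      moreover have "\<bar>F k x' - F k x\<bar> \<le> real k * dist x' x"
        using lip[of k x' x] lip[of k x x'] by (simp add: dist_commute abs_le_iff)
      ultimately show "dist (F k x') (F k x) \<le> e" by (simp add: dist_real_def)
    qed
  qed
  show "f x \<le> F k x \<and> F k x \<le> C" if "x \<in> S" for k x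
    using up[OF that, of k x] leC[of k x] by simp
  show "(\<lambda>k. F k x) \<longlonglongrightarrow> f x" if xS: "x \<in> S" and c: "continuous (at x within S) f" for x
  proof (rule LIMSEQ_I)
    fix e :: real assume "0 < e"
    from c[unfolded continuous_within_eps_delta] \<open>0 < e\<close>
    obtain d where d: "d > 0" "\<And>y. y \<in> S \<Longrightarrow> dist y x < d \<Longrightarrow> dist (f y) (f x) < e / 2"
      by (metis half_gt_zero)
    obtain N :: nat where N: "real N > 2 * C / d" using reals_Archimedean2 by blast
    show "\<exists>no. \<forall>k\<ge>no. norm (F k x - f x) < e"
    proof (intro exI allI impI)
      fix k assume "N \<le> k"
      have Cnn: "C \<ge> 0" using bnd[OF xS] by simp
      have kd: "real k * d > 2 * C"
      proof -
        have "real k \<ge> real N" using \<open>N \<le> k\<close> by simp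
        then have "real k > 2 * C / d" using N by linarith
        then show ?thesis using d(1) by (simp add: field_simps)
      qed
      have "F k x \<le> f x + e / 2"
        unfolding F_def
      proof (rule cSUP_least[OF Sne])
        fix y assume yS: "y \<in> S"
        show "f y - real k * dist x y \<le> f x + e / 2"
        proof (cases "dist y x < d")
          case True
          then have "\<bar>f y - f x\<bar> < e / 2" using d(2)[OF yS] by (simp add: dist_real_def)
          then have "f y < f x + e / 2" by linarith
          moreover have "real k * dist x y \<ge> 0" by simp
          ultimately show ?thesis by linarith
        next
          case False
          then have "real k * dist x y \<ge> real k * d"
            by (simp add: dist_commute mult_left_mono)
          moreover have "f y \<le> C" "- C \<le> f x" using bnd[OF yS] bnd[OF xS] by auto
          ultimately show ?thesis using kd \<open>0 < e\<close> by linarith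
        qed
      qed
      moreover have "f x \<le> F k x" using up[OF xS, of k x] by simp
      ultimately show "norm (F k x - f x) < e" using \<open>0 < e\<close> by simp
    qed
  qed
qed

lemma completion_measurable_AE:
  fixes f g :: "'a \<Rightarrow> real"
  assumes g: "g \<in> borel_measurable M" and ae: "AE x in M. f x = g x"
  shows "f \<in> borel_measurable (completion M)"
proof (rule borel_measurableI)
  fix U :: "real set" assume "open U"
  have A: "g -` U \<inter> space (completion M) \<in> sets (completion M)"
    using g \<open>open U\<close> by (simp add: measurable_sets borel_open)
  have "AE x in completion M. x \<in> g -` U \<inter> space (completion M) \<longleftrightarrow> x \<in> f -` U \<inter> space (completion M)"
    using AE_completion[OF ae] by eventually_elim auto
  then show "f -` U \<inter> space (completion M) \<in> sets (completion M)"
    by (rule completion.in_sets_AE[OF _ A]) auto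
qed

lemma weak_conv_ae:
  fixes f :: "'a::metric_space \<Rightarrow> real" and Pt :: "nat \<Rightarrow> 'a measure" and P :: "'a measure"
  assumes weak: "weak_conv_on S Pt P"
    and SB: "S \<in> sets borel" and PB: "sets P = sets borel" and fin: "finite_measure P"
    and bnd: "\<And>x. x \<in> S \<Longrightarrow> \<bar>f x\<bar> \<le> C"
    and cont: "AE x in P. x \<in> S \<longrightarrow> continuous (at x within S) f"
    and intg: "eventually (\<lambda>t. \<forall>h::'a\<Rightarrow>real. integrable (Pt t) h) sequentially"
  shows "set_integrable (completion P) S f \<and>
    (\<lambda>t. set_lebesgue_integral (Pt t) S f) \<longlonglongrightarrow> set_lebesgue_integral (completion P) S f"
proof (cases "S = {}")
  case True
  then show ?thesis by (simp add: set_integrable_def set_lebesgue_integral_def)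
next
  case Sne: False
  define F where "F \<equiv> \<lambda>(k::nat) x. (SUP y\<in>S. f y - real k * dist x y)"
  define G where "G \<equiv> \<lambda>(k::nat) x. - (SUP y\<in>S. - f y - real k * dist x y)"
  have bnd': "\<And>x. x \<in> S \<Longrightarrow> \<bar>- f x\<bar> \<le> C" using bnd by simp
  have UF1: "continuous_on S (F k)" for k
    unfolding F_def by (rule upper_approx(1)[OF Sne bnd])
  have UF2: "x \<in> S \<Longrightarrow> f x \<le> F k x \<and> F k x \<le> C" for k x
    unfolding F_def by (rule upper_approx(2)[OF Sne bnd])
  have UF3: "x \<in> S \<Longrightarrow> continuous (at x within S) f \<Longrightarrow> (\<lambda>k. F k x) \<longlonglongrightarrow> f x" for x
    unfolding F_def by (rule upper_approx(3)[OF Sne bnd])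
  have UG1: "continuous_on S (\<lambda>x. SUP y\<in>S. - f y - real k * dist x y)" for k
    by (rule upper_approx(1)[OF Sne bnd'])
  have UG2: "x \<in> S \<Longrightarrow> - f x \<le> (SUP y\<in>S. - f y - real k * dist x y) \<and> (SUP y\<in>S. - f y - real k * dist x y) \<le> C" for k x
    by (rule upper_approx(2)[OF Sne bnd'])
  have UG3: "x \<in> S \<Longrightarrow> continuous (at x within S) (\<lambda>x. - f x) \<Longrightarrow> (\<lambda>k. SUP y\<in>S. - f y - real k * dist x y) \<longlonglongrightarrow> - f x" for x
    by (rule upper_approx(3)[OF Sne bnd'])
  have Gc: "continuous_on S (G k)" for k
    unfolding G_def using UG1[of k] by (intro continuous_intros) auto
  have Gb: "x \<in> S \<Longrightarrow> G k x \<le> f x \<and> - C \<le> G k x" for k x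
    unfolding G_def using UG2[of x k] by auto
  have Glim: "x \<in> S \<Longrightarrow> continuous (at x within S) f \<Longrightarrow> (\<lambda>k. G k x) \<longlonglongrightarrow> f x" for x
  proof -
    assume "x \<in> S" "continuous (at x within S) f"
    then have "continuous (at x within S) (\<lambda>x. - f x)" by (intro continuous_intros)
    from UG3[OF \<open>x \<in> S\<close> this] have "(\<lambda>k. - G k x) \<longlonglongrightarrow> - f x" unfolding G_def by simp
    then show ?thesis using tendsto_minus[of "\<lambda>k. - G k x" "- f x"] by simp
  qed
  have Cnn: "C \<ge> 0" using Sne bnd by (meson abs_ge_zero ex_in_conv order_trans)
  define sF where "sF k x = indicator S x *\<^sub>R F k x" for k x
  define sG where "sG k x = indicator S x *\<^sub>R G k x" for k x
  define sf where "sf x = indicator S x *\<^sub>R f x" for x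
  have sFm: "sF k \<in> borel_measurable P" for k
    unfolding sF_def using borel_measurable_continuous_on_indicator[OF SB UF1[of k]]
    by (simp add: measurable_cong_sets[OF PB refl])
  have sGm: "sG k \<in> borel_measurable P" for k
    unfolding sG_def using borel_measurable_continuous_on_indicator[OF SB Gc[of k]]
    by (simp add: measurable_cong_sets[OF PB refl])
  have limF: "AE x in P. (\<lambda>k. sF k x) \<longlonglongrightarrow> sf x"
    using cont
  proof eventually_elim
    case (elim x)
    show ?case
    proof (cases "x \<in> S")
      case True
      then show ?thesis using UF3[of x] elim by (simp add: sF_def sf_def)
    qed (simp add: sF_def sf_def)
  qed
  have limG: "AE x in P. (\<lambda>k. sG k x) \<longlonglongrightarrow> sf x"
    using cont
  proof eventually_elim
    case (elim x)
    show ?case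
    proof (cases "x \<in> S")
      case True
      then show ?thesis using Glim[of x] elim by (simp add: sG_def sf_def)
    qed (simp add: sG_def sf_def)
  qed
  define h where "h x = lim (\<lambda>k. sF k x)" for x
  have hm: "h \<in> borel_measurable P" unfolding h_def using sFm by measurable
  have "AE x in P. sf x = h x"
    using limF by eventually_elim (simp add: h_def limI)
  then have sfm: "sf \<in> borel_measurable (completion P)"
    by (rule completion_measurable_AE[OF hm])
  have finc: "finite_measure (completion P)"
    using fin by (intro finite_measureI) (simp add: finite_measure.emeasure_finite)
  have intC: "integrable (completion P) (\<lambda>_. C)"
    using finc finite_measure.integrable_const by blast
  have FbS: "x \<in> S \<Longrightarrow> \<bar>F k x\<bar> \<le> C" for x k
    using UF2[of x k] bnd[of x] by (simp add: abs_le_iff)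
  have GbS: "x \<in> S \<Longrightarrow> \<bar>G k x\<bar> \<le> C" for x k
    using Gb[of x k] bnd[of x] by (simp add: abs_le_iff)
  have bF: "AE x in completion P. norm (sF k x) \<le> C" for k
    using FbS Cnn by (intro AE_I2) (auto simp: sF_def indicator_def)
  have bG: "AE x in completion P. norm (sG k x) \<le> C" for k
    using GbS Cnn by (intro AE_I2) (auto simp: sG_def indicator_def)
  have sfint: "integrable (completion P) sf"
    by (rule integrable_dominated_convergence[OF sfm measurable_completion[OF sFm] intC AE_completion[OF limF] bF])
  define I where "I = integral\<^sup>L (completion P) sf"
  have AF: "(\<lambda>k. integral\<^sup>L P (sF k)) \<longlonglongrightarrow> I"
    using integral_dominated_convergence[OF sfm measurable_completion[OF sFm] intC AE_completion[OF limF] bF]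
    by (simp add: I_def integral_completion[OF sFm])
  have AG: "(\<lambda>k. integral\<^sup>L P (sG k)) \<longlonglongrightarrow> I"
    using integral_dominated_convergence[OF sfm measurable_completion[OF sGm] intC AE_completion[OF limG] bG]
    by (simp add: I_def integral_completion[OF sGm])
  have WF: "(\<lambda>t. integral\<^sup>L (Pt t) (sF k)) \<longlonglongrightarrow> integral\<^sup>L P (sF k)" for k
  proof -
    have "bounded (F k ` S)"
      using FbS by (intro boundedI[where B=C]) auto
    then show ?thesis using weak UF1[of k] unfolding weak_conv_on_def sF_def set_lebesgue_integral_def by blast
  qed
  have WG: "(\<lambda>t. integral\<^sup>L (Pt t) (sG k)) \<longlonglongrightarrow> integral\<^sup>L P (sG k)" for k
  proof -
    have "bounded (G k ` S)"
      using GbS by (intro boundedI[where B=C]) auto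
    then show ?thesis using weak Gc[of k] unfolding weak_conv_on_def sG_def set_lebesgue_integral_def by blast
  qed
  have conv: "(\<lambda>t. integral\<^sup>L (Pt t) sf) \<longlonglongrightarrow> I"
  proof (rule LIMSEQ_I)
    fix e :: real assume "e > 0"
    then have e2: "e / 2 > 0" by simp
    from AF[THEN LIMSEQ_D, OF e2] obtain k1 where k1: "\<And>k. k \<ge> k1 \<Longrightarrow> norm (integral\<^sup>L P (sF k) - I) < e / 2" by blast
    from AG[THEN LIMSEQ_D, OF e2] obtain k2 where k2: "\<And>k. k \<ge> k2 \<Longrightarrow> norm (integral\<^sup>L P (sG k) - I) < e / 2" by blast
    define k where "k = max k1 k2"
    have "eventually (\<lambda>t. norm (integral\<^sup>L (Pt t) (sF k) - integral\<^sup>L P (sF k)) < e / 2) sequentially"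
      using WF[of k, unfolded tendsto_iff dist_norm] e2 by blast
    moreover have "eventually (\<lambda>t. norm (integral\<^sup>L (Pt t) (sG k) - integral\<^sup>L P (sG k)) < e / 2) sequentially"
      using WG[of k, unfolded tendsto_iff dist_norm] e2 by blast
    ultimately have "eventually (\<lambda>t. norm (integral\<^sup>L (Pt t) sf - I) < e) sequentially"
      using intg
    proof eventually_elim
      case (elim t)
      have "integral\<^sup>L (Pt t) sf \<le> integral\<^sup>L (Pt t) (sF k)"
        using elim(3) UF2[of _ k] by (intro integral_mono) (auto simp: sf_def sF_def indicator_def)
      moreover have "integral\<^sup>L (Pt t) (sG k) \<le> integral\<^sup>L (Pt t) sf"
        using elim(3) Gb[of _ k] by (intro integral_mono) (auto simp: sf_def sG_def indicator_def)
      moreover have "norm (integral\<^sup>L P (sF k) - I) < e / 2" "norm (integral\<^sup>L P (sG k) - I) < e / 2"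
        using k1 k2 by (auto simp: k_def)
      ultimately show ?case using elim(1,2) unfolding real_norm_def abs_less_iff by linarith
    qed
    then show "\<exists>no. \<forall>t\<ge>no. norm (integral\<^sup>L (Pt t) sf - I) < e"
      by (simp add: eventually_sequentially)
  qed
  show ?thesis
    using sfint conv unfolding set_integrable_def set_lebesgue_integral_def sf_def I_def by simp
qed



definition sigma :: "real ^ 'n \<Rightarrow> real" where "sigma x = (\<Sum>i\<in>UNIV. x $ i)"

definition posorth :: "(real ^ 'n) set" where "posorth = {x. \<forall>i. 0 < x $ i}"

lemma open_posorth: "open (posorth :: (real ^ 'n) set)"
proof -
  have "(posorth :: (real ^ 'n) set) = (\<Inter>i\<in>UNIV. {x. 0 < x $ i})" by (auto simp: posorth_def)
  moreover have "open {x :: real ^ 'n. 0 < x $ i}" for i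
    by (intro open_Collect_less continuous_intros)
  ultimately have "open (\<Inter>i\<in>UNIV. {x :: real ^ 'n. 0 < x $ i})"
    by (intro open_INT) auto
  then show ?thesis using \<open>posorth = _\<close> by simp
qed

lemma sigma_pos: "x \<in> posorth \<Longrightarrow> sigma x > 0"
  unfolding sigma_def posorth_def by (intro sum_pos) auto

lemma sigma_add: "sigma (x + y) = sigma x + sigma y"
  by (simp add: sigma_def sum.distrib)

lemma sigma_scale: "sigma (c *\<^sub>R x) = c * sigma x"
  by (simp add: sigma_def sum_distrib_left)

lemma open_simplex_posorth: "p \<in> open_simplex \<longleftrightarrow> p \<in> posorth \<and> sigma p = 1"
  by (simp add: open_simplex_def posorth_def sigma_def)

lemma posorth_normalize: "x \<in> posorth \<Longrightarrow> (1 / sigma x) *\<^sub>R x \<in> open_simplex"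
proof -
  assume x: "x \<in> posorth"
  then have s: "sigma x > 0" by (rule sigma_pos)
  have "(1 / sigma x) *\<^sub>R x \<in> posorth" using x s by (simp add: posorth_def)
  moreover have "sigma ((1 / sigma x) *\<^sub>R x) = 1" using s by (simp add: sigma_scale)
  ultimately show ?thesis by (simp add: open_simplex_posorth)
qed

lemma pos_comb:
  fixes u v a b :: real
  assumes "0 \<le> u" "0 \<le> v" "u + v = 1" "a > 0" "b > 0"
  shows "u * a + v * b > 0"
proof (cases "u = 0")
  case True then show ?thesis using assms by simp
next
  case False
  then have "u * a > 0" using assms by simp
  moreover have "v * b \<ge> 0" using assms by simp
  ultimately show ?thesis by linarith
qed

lemma concave_continuous_simplex:
  fixes \<Phi> :: "real ^ 'n \<Rightarrow> real"
  assumes conc: "concave_on open_simplex \<Phi>"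
  shows "continuous_on open_simplex \<Phi>"
proof -
  define \<Psi> where "\<Psi> x = sigma x * \<Phi> ((1 / sigma x) *\<^sub>R x)" for x
  have convC: "convex (posorth :: (real ^ 'n) set)"
    by (auto simp: convex_def posorth_def intro!: pos_comb)
  have "concave_on posorth \<Psi>"
    unfolding concave_on_iff
  proof (intro conjI convC ballI allI impI)
    fix x y :: "real ^ 'n" and u v :: real
    assume x: "x \<in> posorth" and y: "y \<in> posorth" and u: "0 \<le> u" and v: "0 \<le> v" and uv: "u + v = 1"
    define a where "a = sigma x"
    define b where "b = sigma y"
    have a: "a > 0" and b: "b > 0" using sigma_pos[OF x] sigma_pos[OF y] by (auto simp: a_def b_def)
    define c where "c = u * a + v * b"
    have c: "c > 0" using a b u v uv unfolding c_def by (intro pos_comb) auto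
    have sz: "sigma (u *\<^sub>R x + v *\<^sub>R y) = c"
      by (simp add: sigma_add sigma_scale c_def a_def b_def)
    have xs: "(1 / a) *\<^sub>R x \<in> open_simplex" and ys: "(1 / b) *\<^sub>R y \<in> open_simplex"
      using posorth_normalize[OF x] posorth_normalize[OF y] by (auto simp: a_def b_def)
    have eq: "(1 / c) *\<^sub>R (u *\<^sub>R x + v *\<^sub>R y) = (u * a / c) *\<^sub>R ((1 / a) *\<^sub>R x) + (v * b / c) *\<^sub>R ((1 / b) *\<^sub>R y)"
      using a b by (simp add: scaleR_add_right)
    have w: "u * a / c \<ge> 0" "v * b / c \<ge> 0" "u * a / c + v * b / c = 1"
      using a b c u v by (auto simp: c_def add_divide_distrib[symmetric])
    have "\<Phi> ((1 / c) *\<^sub>R (u *\<^sub>R x + v *\<^sub>R y)) \<ge> (u * a / c) * \<Phi> ((1 / a) *\<^sub>R x) + (v * b / c) * \<Phi> ((1 / b) *\<^sub>R y)"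
      unfolding eq using conc[unfolded concave_on_iff] xs ys w by blast
    then have "c * \<Phi> ((1 / c) *\<^sub>R (u *\<^sub>R x + v *\<^sub>R y)) \<ge> c * ((u * a / c) * \<Phi> ((1 / a) *\<^sub>R x) + (v * b / c) * \<Phi> ((1 / b) *\<^sub>R y))"
      using c by (simp add: mult_left_mono)
    also have "c * ((u * a / c) * \<Phi> ((1 / a) *\<^sub>R x) + (v * b / c) * \<Phi> ((1 / b) *\<^sub>R y)) = u * \<Psi> x + v * \<Psi> y"
      using c by (simp add: \<Psi>_def a_def[symmetric] b_def[symmetric] field_simps)
    finally show "u * \<Psi> x + v * \<Psi> y \<le> \<Psi> (u *\<^sub>R x + v *\<^sub>R y)"
      by (simp add: \<Psi>_def sz)
  qed
  then have "convex_on posorth (\<lambda>x. - \<Psi> x)" by (simp add: concave_on_def)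
  then have "continuous_on posorth (\<lambda>x. - \<Psi> x)" by (rule convex_on_continuous[OF open_posorth])
  then have "continuous_on posorth \<Psi>" using continuous_on_minus[of posorth "\<lambda>x. - \<Psi> x"] by simp
  then have "continuous_on open_simplex \<Psi>" by (rule continuous_on_subset) (auto simp: open_simplex_posorth)
  moreover have "\<Psi> x = \<Phi> x" if "x \<in> open_simplex" for x
    using that by (simp add: \<Psi>_def open_simplex_posorth)
  ultimately show ?thesis using continuous_on_cong by blast
qed



definition Ls :: "(real ^ 'n \<Rightarrow> real ^ 'n) \<Rightarrow> real ^ 'n \<Rightarrow> real ^ 'n \<Rightarrow> real" where
  "Ls \<pi> p q = (\<Sum>i\<in>UNIV. \<pi> p $ i * q $ i / p $ i)"

lemma Ls_add: "Ls \<pi> p (x + y) = Ls \<pi> p x + Ls \<pi> p y"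
  by (simp add: Ls_def sum.distrib[symmetric] distrib_left add_divide_distrib)

lemma Ls_scale: "Ls \<pi> p (c *\<^sub>R x) = c * Ls \<pi> p x"
  unfolding Ls_def sum_distrib_left by (rule sum.cong) (auto simp: algebra_simps)

lemma sigma_diff: "sigma (x - y) = sigma x - sigma y"
  by (simp add: sigma_def sum_subtractf)

lemma Ls_diff: "Ls \<pi> p (x - y) = Ls \<pi> p x - Ls \<pi> p y"
  by (simp add: Ls_def sum_subtractf[symmetric] right_diff_distrib diff_divide_distrib)

lemma Ls_self: "p \<in> open_simplex \<Longrightarrow> \<pi> p \<in> closed_simplex \<Longrightarrow> Ls \<pi> p p = 1"
proof -
  assume p: "p \<in> open_simplex" and c: "\<pi> p \<in> closed_simplex"
  have "Ls \<pi> p p = (\<Sum>i\<in>UNIV. \<pi> p $ i)"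
    unfolding Ls_def by (rule sum.cong) (use p in \<open>auto simp: open_simplex_def less_imp_neq[symmetric]\<close>)
  then show ?thesis using c by (simp add: closed_simplex_def)
qed

lemma Ls_bound:
  assumes "p \<in> open_simplex" "\<pi> p \<in> closed_simplex"
  shows "\<bar>Ls \<pi> p v\<bar> \<le> (\<Sum>i\<in>UNIV. \<bar>v $ i\<bar> / p $ i)"
proof -
  have "\<bar>Ls \<pi> p v\<bar> \<le> (\<Sum>i\<in>UNIV. \<bar>\<pi> p $ i * v $ i / p $ i\<bar>)"
    unfolding Ls_def by (rule sum_abs)
  also have "\<dots> \<le> (\<Sum>i\<in>UNIV. \<bar>v $ i\<bar> / p $ i)"
  proof (rule sum_mono)
    fix i
    have pi: "0 \<le> \<pi> p $ i" "\<pi> p $ i \<le> 1"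
    proof -
      show "0 \<le> \<pi> p $ i" using assms(2) by (simp add: closed_simplex_def)
      have "\<pi> p $ i \<le> (\<Sum>j\<in>UNIV. \<pi> p $ j)"
        using assms(2) by (intro member_le_sum) (auto simp: closed_simplex_def)
      then show "\<pi> p $ i \<le> 1" using assms(2) by (simp add: closed_simplex_def)
    qed
    have p: "p $ i > 0" using assms(1) by (simp add: open_simplex_def)
    have "\<bar>\<pi> p $ i * v $ i / p $ i\<bar> = \<pi> p $ i * (\<bar>v $ i\<bar> / p $ i)"
      using pi p by (simp add: abs_mult)
    also have "\<dots> \<le> 1 * (\<bar>v $ i\<bar> / p $ i)"
      using pi p by (intro mult_right_mono) auto
    finally show "\<bar>\<pi> p $ i * v $ i / p $ i\<bar> \<le> \<bar>v $ i\<bar> / p $ i" by simp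
  qed
  finally show ?thesis .
qed

lemma S_ratio:
  assumes "(p, q) \<in> S_set M" "M > 0"
  shows "q $ i \<le> M * p $ i" "p $ i \<le> M * q $ i" "p $ i > 0" "q $ i > 0"
proof -
  have p: "p $ i > 0" and q: "q $ i > 0" using assms(1) by (auto simp: S_set_def open_simplex_def)
  have r: "1 / M \<le> q $ i / p $ i" "q $ i / p $ i \<le> M" using assms(1) by (auto simp: S_set_def)
  show "q $ i \<le> M * p $ i" using r(2) p by (simp add: divide_le_eq mult.commute)
  have "1 / M * p $ i \<le> q $ i" using r(1) p by (simp add: le_divide_eq)
  then show "p $ i \<le> M * q $ i" using assms(2) by (simp add: field_simps)
  show "p $ i > 0" "q $ i > 0" by (fact p q)+
qed

lemma Ls_S_bounds:
  assumes "(p, q) \<in> S_set M" "M > 0" "\<pi> p \<in> closed_simplex"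
  shows "1 / M \<le> Ls \<pi> p q" "Ls \<pi> p q \<le> M"
proof -
  have w: "\<And>i. 0 \<le> \<pi> p $ i" "(\<Sum>i\<in>UNIV. \<pi> p $ i) = 1" using assms(3) by (auto simp: closed_simplex_def)
  have r: "\<And>i. 1 / M \<le> q $ i / p $ i" "\<And>i. q $ i / p $ i \<le> M" using assms(1) by (auto simp: S_set_def)
  have eq: "Ls \<pi> p q = (\<Sum>i\<in>UNIV. \<pi> p $ i * (q $ i / p $ i))" by (simp add: Ls_def)
  have "(\<Sum>i\<in>UNIV. \<pi> p $ i * (1 / M)) \<le> (\<Sum>i\<in>UNIV. \<pi> p $ i * (q $ i / p $ i))"
    using w r by (intro sum_mono mult_left_mono) auto
  moreover have "(\<Sum>i\<in>UNIV. \<pi> p $ i * (1 / M)) = (\<Sum>i\<in>UNIV. \<pi> p $ i) * (1 / M)"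
    by (rule sum_distrib_right[symmetric])
  ultimately show "1 / M \<le> Ls \<pi> p q" using w by (simp only: eq)
  have "(\<Sum>i\<in>UNIV. \<pi> p $ i * (q $ i / p $ i)) \<le> (\<Sum>i\<in>UNIV. \<pi> p $ i * M)"
    using w r by (intro sum_mono mult_left_mono) auto
  moreover have "(\<Sum>i\<in>UNIV. \<pi> p $ i * M) = (\<Sum>i\<in>UNIV. \<pi> p $ i) * M"
    by (rule sum_distrib_right[symmetric])
  ultimately show "Ls \<pi> p q \<le> M" using w by (simp only: eq)
qed

lemma S_shift:
  assumes "(p, q) \<in> S_set M" "M > 0"
  shows "0 \<le> t \<Longrightarrow> t \<le> 1 \<Longrightarrow> p + t *\<^sub>R (q - p) \<in> open_simplex"
    and "0 \<le> t \<Longrightarrow> t * M < 1 \<Longrightarrow> p - t *\<^sub>R (q - p) \<in> open_simplex"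
proof -
  have ps: "p \<in> open_simplex" and qs: "q \<in> open_simplex" using assms(1) by (auto simp: S_set_def)
  have sp: "sigma p = 1" "sigma q = 1" using ps qs by (auto simp: open_simplex_posorth)
  have sig: "sigma (p + t *\<^sub>R (q - p)) = 1" "sigma (p - t *\<^sub>R (q - p)) = 1"
    using sp by (simp_all add: sigma_add sigma_scale sigma_diff)
  assume t: "0 \<le> t" "t \<le> 1"
  have "(p + t *\<^sub>R (q - p)) $ i > 0" for i
  proof -
    have "(p + t *\<^sub>R (q - p)) $ i = (1 - t) * p $ i + t * q $ i" by (simp add: algebra_simps)
    moreover have "(1 - t) * p $ i \<ge> 0" "t * q $ i \<ge> 0" using t S_ratio[OF assms, of i] by auto
    moreover have "(1 - t) * p $ i > 0 \<or> t * q $ i > 0"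
      using t S_ratio[OF assms, of i] by (cases "t = 1") auto
    ultimately show ?thesis by linarith
  qed
  then show "p + t *\<^sub>R (q - p) \<in> open_simplex" using sig by (simp add: open_simplex_posorth posorth_def)
next
  have ps: "p \<in> open_simplex" and qs: "q \<in> open_simplex" using assms(1) by (auto simp: S_set_def)
  have sp: "sigma p = 1" "sigma q = 1" using ps qs by (auto simp: open_simplex_posorth)
  have sig: "sigma (p - t *\<^sub>R (q - p)) = 1"
    using sp by (simp_all add: sigma_add sigma_scale sigma_diff)
  assume t: "0 \<le> t" "t * M < 1"
  have "(p - t *\<^sub>R (q - p)) $ i > 0" for i
  proof -
    have "(p - t *\<^sub>R (q - p)) $ i = (1 + t) * p $ i - t * q $ i" by (simp add: algebra_simps)
    moreover have "t * q $ i \<le> t * (M * p $ i)" using t S_ratio[OF assms, of i] by (intro mult_left_mono) auto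
    moreover have "t * (M * p $ i) < 1 * p $ i" using t S_ratio[OF assms, of i]
      by (metis mult.assoc mult.commute mult_strict_right_mono)
    moreover have "t * p $ i \<ge> 0" using t S_ratio[OF assms, of i] by auto
    ultimately show ?thesis by (simp add: algebra_simps)
  qed
  then show "p - t *\<^sub>R (q - p) \<in> open_simplex" using sig by (simp add: open_simplex_posorth posorth_def)
qed

definition Kc :: "real \<Rightarrow> nat" where "Kc M = nat \<lceil>M\<rceil> + 1"

definition Rk :: "(real ^ 'n \<Rightarrow> real) \<Rightarrow> nat \<Rightarrow> real ^ 'n \<Rightarrow> real ^ 'n \<Rightarrow> real" where
  "Rk \<Phi> k p q = real k * (\<Phi> (p + (1 / real k) *\<^sub>R (q - p)) - \<Phi> p)"

definition Lk :: "(real ^ 'n \<Rightarrow> real) \<Rightarrow> nat \<Rightarrow> real ^ 'n \<Rightarrow> real ^ 'n \<Rightarrow> real" where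
  "Lk \<Phi> k p q = real k * (\<Phi> p - \<Phi> (p - (1 / real k) *\<^sub>R (q - p)))"

definition kinkset :: "(real ^ 'n \<Rightarrow> real) \<Rightarrow> real \<Rightarrow> ((real ^ 'n) \<times> (real ^ 'n)) set" where
  "kinkset \<Phi> M = {x \<in> S_set M. \<exists>a\<in>\<rat>. \<exists>b\<in>\<rat>. a < b \<and> (\<forall>k\<ge>Kc M. Rk \<Phi> k (fst x) (snd x) \<le> a)
      \<and> (\<forall>k\<ge>Kc M. b \<le> Lk \<Phi> k (fst x) (snd x))}"

lemma Kc_prop:
  assumes "M \<ge> 1" "k \<ge> Kc M"
  shows "real k > M" "(1 / real k) * M < 1" "1 / real k \<le> 1" "0 < 1 / real k" "real k > 0"
proof -
  have "real k \<ge> real (nat \<lceil>M\<rceil>) + 1" using assms(2) unfolding Kc_def by linarith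
  moreover have "real (nat \<lceil>M\<rceil>) \<ge> M" by linarith
  ultimately show k: "real k > M" by linarith
  then show kp: "real k > 0" using assms(1) by linarith
  show "(1 / real k) * M < 1" using k kp by (simp add: field_simps)
  show "1 / real k \<le> 1" using k assms(1) by (simp add: field_simps)
  show "0 < 1 / real k" using kp by simp
qed

lemma not_kink:
  assumes "x \<in> S_set M" "x \<notin> kinkset \<Phi> M" "a < b"
    "\<forall>k\<ge>Kc M. Rk \<Phi> k (fst x) (snd x) \<le> a" "\<forall>k\<ge>Kc M. b \<le> Lk \<Phi> k (fst x) (snd x)"
  shows False
proof -
  obtain r1 where r1: "r1 \<in> \<rat>" "a < r1" "r1 < b" using Rats_dense_in_real[OF assms(3)] by blast
  obtain r2 where r2: "r2 \<in> \<rat>" "r1 < r2" "r2 < b" using Rats_dense_in_real[OF r1(3)] by blast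
  have R: "\<forall>k\<ge>Kc M. Rk \<Phi> k (fst x) (snd x) \<le> r1" using assms(4) r1 by force
  have L: "\<forall>k\<ge>Kc M. r2 \<le> Lk \<Phi> k (fst x) (snd x)" using assms(5) r2 by force
  have "x \<in> kinkset \<Phi> M"
    unfolding kinkset_def using assms(1) R L r1(1) r2(1,2) by blast
  then show False using assms(2) by simp
qed

context
  fixes \<pi> :: "real ^ 'n \<Rightarrow> real ^ 'n" and \<Phi> :: "real ^ 'n \<Rightarrow> real" and M :: real
  assumes Mge: "M \<ge> 1"
    and pi_cs: "\<And>p. p \<in> open_simplex \<Longrightarrow> \<pi> p \<in> closed_simplex"
    and conc: "concave_on open_simplex \<Phi>"
    and \<Phi>pos: "\<And>p. p \<in> open_simplex \<Longrightarrow> \<Phi> p > 0"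
    and supg: "\<And>p q. p \<in> open_simplex \<Longrightarrow> q \<in> open_simplex \<Longrightarrow> Ls \<pi> p q \<ge> \<Phi> q / \<Phi> p"
begin

lemma Mpos: "M > 0" using Mge by simp

lemma slope_RL:
  assumes S: "(p, q) \<in> S_set M" and k: "k \<ge> Kc M" and j: "j \<ge> Kc M"
  shows "Rk \<Phi> k p q \<le> Lk \<Phi> j p q"
proof -
  define a where "a = 1 / real k"
  define b where "b = 1 / real j"
  have a: "a > 0" "a \<le> 1" and aM: "a * M < 1" using Kc_prop[OF Mge k] by (auto simp: a_def)
  have b: "b > 0" "b * M < 1" using Kc_prop[OF Mge j] by (auto simp: b_def)
  define x1 where "x1 = p - b *\<^sub>R (q - p)"
  define x2 where "x2 = p + a *\<^sub>R (q - p)"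
  have x1: "x1 \<in> open_simplex" unfolding x1_def using S_shift(2)[OF S Mpos] b by auto
  have x2: "x2 \<in> open_simplex" unfolding x2_def using S_shift(1)[OF S Mpos] a by auto
  define t where "t = b / (a + b)"
  have t: "0 \<le> t" "t \<le> 1" using a b by (auto simp: t_def)
  have t1: "1 - t = a / (a + b)" using a b by (simp add: t_def field_simps)
  have "(1 - t) *\<^sub>R x1 + t *\<^sub>R x2 = p"
  proof -
    from t1 have "(1 - t) *\<^sub>R x1 + t *\<^sub>R x2 = (a / (a + b)) *\<^sub>R x1 + (b / (a + b)) *\<^sub>R x2"
      by (simp add: t_def)
    also have "\<dots> = (1 / (a + b)) *\<^sub>R (a *\<^sub>R x1 + b *\<^sub>R x2)"
      by (simp add: scaleR_add_right)
    also have "a *\<^sub>R x1 + b *\<^sub>R x2 = (a + b) *\<^sub>R p"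
      by (simp add: x1_def x2_def algebra_simps)
    finally show ?thesis using a b by simp
  qed
  then have "\<Phi> p \<ge> (1 - t) * \<Phi> x1 + t * \<Phi> x2"
    using concave_onD[OF conc t x1 x2] by simp
  then have "(a + b) * \<Phi> p \<ge> (a + b) * ((1 - t) * \<Phi> x1 + t * \<Phi> x2)"
    using a b by (intro mult_left_mono) auto
  also have "(a + b) * ((1 - t) * \<Phi> x1 + t * \<Phi> x2) = a * \<Phi> x1 + b * \<Phi> x2"
    unfolding t1 using a b by (simp add: t_def distrib_left)
  finally have ineq: "b * (\<Phi> x2 - \<Phi> p) \<le> a * (\<Phi> p - \<Phi> x1)" by (simp add: algebra_simps)
  have "Rk \<Phi> k p q = (\<Phi> x2 - \<Phi> p) / a" using a by (simp add: Rk_def x2_def a_def)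
  also have "\<dots> \<le> (\<Phi> p - \<Phi> x1) / b"
    using ineq a b by (simp add: divide_simps mult.commute)
  also have "\<dots> = Lk \<Phi> j p q" using b by (simp add: Lk_def x1_def b_def)
  finally show ?thesis .
qed

lemma ell_Ls: "ell \<pi> x = ln (Ls \<pi> (fst x) (snd x))"
  by (simp add: ell_def Ls_def)

lemma sup_lower:
  assumes S: "(p, q) \<in> S_set M" and k: "k \<ge> Kc M" and p': "p' \<in> open_simplex"
  shows "Ls \<pi> p' q \<ge> Ls \<pi> p' p + real k * (\<Phi> (p + (1 / real k) *\<^sub>R (q - p)) / \<Phi> p' - Ls \<pi> p' p)"
proof -
  define xk where "xk = p + (1 / real k) *\<^sub>R (q - p)"
  have kp: "real k > 0" "1 / real k \<le> 1" using Kc_prop[OF Mge k] by auto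
  have xk: "xk \<in> open_simplex" unfolding xk_def using S_shift(1)[OF S Mpos] kp by auto
  have "Ls \<pi> p' xk = Ls \<pi> p' p + (1 / real k) * (Ls \<pi> p' q - Ls \<pi> p' p)"
    by (simp add: xk_def Ls_add Ls_scale Ls_diff)
  moreover have "Ls \<pi> p' xk \<ge> \<Phi> xk / \<Phi> p'" by (rule supg[OF p' xk])
  ultimately have "(1 / real k) * (Ls \<pi> p' q - Ls \<pi> p' p) \<ge> \<Phi> xk / \<Phi> p' - Ls \<pi> p' p" by linarith
  then have "real k * ((1 / real k) * (Ls \<pi> p' q - Ls \<pi> p' p)) \<ge> real k * (\<Phi> xk / \<Phi> p' - Ls \<pi> p' p)"
    using kp by (intro mult_left_mono) auto
  then show ?thesis using kp by (simp add: xk_def)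
qed

lemma sup_upper:
  assumes S: "(p, q) \<in> S_set M" and k: "k \<ge> Kc M" and p': "p' \<in> open_simplex"
  shows "Ls \<pi> p' q \<le> Ls \<pi> p' p + real k * (Ls \<pi> p' p - \<Phi> (p - (1 / real k) *\<^sub>R (q - p)) / \<Phi> p')"
proof -
  define yk where "yk = p - (1 / real k) *\<^sub>R (q - p)"
  have kp: "real k > 0" "(1 / real k) * M < 1" using Kc_prop[OF Mge k] by auto
  have yk: "yk \<in> open_simplex" unfolding yk_def using S_shift(2)[OF S Mpos] kp by auto
  have "Ls \<pi> p' yk = Ls \<pi> p' p - (1 / real k) * (Ls \<pi> p' q - Ls \<pi> p' p)"
    by (simp add: yk_def Ls_add Ls_scale Ls_diff)
  moreover have "Ls \<pi> p' yk \<ge> \<Phi> yk / \<Phi> p'" by (rule supg[OF p' yk])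
  ultimately have "(1 / real k) * (Ls \<pi> p' q - Ls \<pi> p' p) \<le> Ls \<pi> p' p - \<Phi> yk / \<Phi> p'" by linarith
  then have "real k * ((1 / real k) * (Ls \<pi> p' q - Ls \<pi> p' p)) \<le> real k * (Ls \<pi> p' p - \<Phi> yk / \<Phi> p')"
    using kp by (intro mult_left_mono) auto
  then show ?thesis using kp by (simp add: yk_def)
qed

lemma ell_cont:
  assumes xS: "(p, q) \<in> S_set M" and nk: "(p, q) \<notin> kinkset \<Phi> M"
  shows "continuous (at (p, q) within S_set M) (ell \<pi>)"
proof -
  define S where "S = (S_set M :: ((real ^ 'n) \<times> (real ^ 'n)) set)"
  define F where "F = at (p, q) within S"
  have ps: "p \<in> open_simplex" and qs: "q \<in> open_simplex" using xS by (auto simp: S_set_def)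
  have Sx: "x \<in> S \<Longrightarrow> fst x \<in> open_simplex \<and> snd x \<in> open_simplex" for x
    by (auto simp: S_def S_set_def)
  have \<Phi>c: "continuous_on open_simplex \<Phi>" by (rule concave_continuous_simplex[OF conc])
  have evS: "eventually (\<lambda>x. x \<in> S) F" by (simp add: F_def eventually_at_filter)
  have pp: "\<Phi> p > 0" using \<Phi>pos[OF ps] .
  have pi: "\<And>i. p $ i > 0" using ps by (simp add: open_simplex_def)
  have fstT: "((\<lambda>x. fst x) \<longlongrightarrow> p) F" unfolding F_def
    using tendsto_fst[OF tendsto_ident_at[of "(p, q)" S]] by simp
  have sndT: "((\<lambda>x. snd x) \<longlongrightarrow> q) F" unfolding F_def
    using tendsto_snd[OF tendsto_ident_at[of "(p, q)" S]] by simp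
  have \<Phi>T: "((\<lambda>x. \<Phi> (fst x)) \<longlongrightarrow> \<Phi> p) F"
  proof -
    have "continuous_on S (\<lambda>x. \<Phi> (fst x))"
      by (rule continuous_on_compose2[OF \<Phi>c]) (auto intro!: continuous_intros dest: Sx)
    then show ?thesis using xS unfolding F_def S_def continuous_on_def by auto
  qed
  have errT: "((\<lambda>x. \<Sum>i\<in>UNIV. \<bar>g x $ i - c $ i\<bar> / fst x $ i) \<longlongrightarrow> 0) F"
    if gT: "(g \<longlongrightarrow> c) F" for g and c :: "real ^ 'n"
  proof -
    have "((\<lambda>x. \<Sum>i\<in>UNIV. \<bar>g x $ i - c $ i\<bar> / fst x $ i) \<longlongrightarrow> (\<Sum>i\<in>UNIV. \<bar>c $ i - c $ i\<bar> / p $ i)) F"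
      using pi by (intro tendsto_intros gT fstT) (auto simp: less_imp_neq[symmetric])
    then show ?thesis by simp
  qed
  have E1: "((\<lambda>x. Ls \<pi> (fst x) (snd x - q)) \<longlongrightarrow> 0) F"
  proof (rule Lim_null_comparison[OF _ errT[OF sndT]])
    show "eventually (\<lambda>x. norm (Ls \<pi> (fst x) (snd x - q)) \<le> (\<Sum>i\<in>UNIV. \<bar>snd x $ i - q $ i\<bar> / fst x $ i)) F"
      using evS
    proof eventually_elim
      case (elim x)
      then have fx: "fst x \<in> open_simplex" using Sx by blast
      show ?case using Ls_bound[of "fst x" \<pi> "snd x - q", OF fx pi_cs[OF fx]] by simp
    qed
  qed
  have E2: "((\<lambda>x. Ls \<pi> (fst x) p) \<longlongrightarrow> 1) F"
  proof -
    have "((\<lambda>x. Ls \<pi> (fst x) (p - fst x)) \<longlongrightarrow> 0) F"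
    proof (rule Lim_null_comparison[OF _ errT[OF fstT]])
      show "eventually (\<lambda>x. norm (Ls \<pi> (fst x) (p - fst x)) \<le> (\<Sum>i\<in>UNIV. \<bar>fst x $ i - p $ i\<bar> / fst x $ i)) F"
        using evS
      proof eventually_elim
        case (elim x)
        then have fx: "fst x \<in> open_simplex" using Sx by blast
        show ?case using Ls_bound[of "fst x" \<pi> "p - fst x", OF fx pi_cs[OF fx]] by (simp add: abs_minus_commute)
      qed
    qed
    then have "((\<lambda>x. 1 + Ls \<pi> (fst x) (p - fst x)) \<longlongrightarrow> 1 + 0) F" by (intro tendsto_add) auto
    moreover have "eventually (\<lambda>x. 1 + Ls \<pi> (fst x) (p - fst x) = Ls \<pi> (fst x) p) F"
      using evS
    proof eventually_elim
      case (elim x)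
      then have fx: "fst x \<in> open_simplex" using Sx by blast
      show ?case using Ls_self[of "fst x" \<pi>, OF fx pi_cs[OF fx]] by (simp add: Ls_diff)
    qed
    ultimately show ?thesis using Lim_transform_eventually by fastforce
  qed
  define T where "T x = Ls \<pi> (fst x) q" for x :: "(real ^ 'n) \<times> (real ^ 'n)"
  have Tp: "T (p, q) = Ls \<pi> p q" by (simp add: T_def)
  have Tlow: "Ls \<pi> p q \<ge> 1 + real k * (\<Phi> (p + (1 / real k) *\<^sub>R (q - p)) / \<Phi> p - 1)" if "k \<ge> Kc M" for k
    using sup_lower[OF xS that ps] Ls_self[of p \<pi>, OF ps pi_cs[OF ps]] by simp
  have Tup: "Ls \<pi> p q \<le> 1 + real k * (1 - \<Phi> (p - (1 / real k) *\<^sub>R (q - p)) / \<Phi> p)" if "k \<ge> Kc M" for k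
    using sup_upper[OF xS that ps] Ls_self[of p \<pi>, OF ps pi_cs[OF ps]] by simp
  have Req: "Rk \<Phi> k p q = \<Phi> p * (real k * (\<Phi> (p + (1 / real k) *\<^sub>R (q - p)) / \<Phi> p - 1))" for k
    using pp by (simp add: Rk_def field_simps)
  have Leq: "Lk \<Phi> k p q = \<Phi> p * (real k * (1 - \<Phi> (p - (1 / real k) *\<^sub>R (q - p)) / \<Phi> p))" for k
    using pp by (simp add: Lk_def field_simps)
  have TT: "(T \<longlongrightarrow> Ls \<pi> p q) F"
  proof (rule order_tendstoI)
    fix a assume a: "a < Ls \<pi> p q"
    have "\<exists>k\<ge>Kc M. a < 1 + real k * (\<Phi> (p + (1 / real k) *\<^sub>R (q - p)) / \<Phi> p - 1)"
    proof (rule ccontr)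
      assume "\<not> ?thesis"
      then have R: "\<forall>k\<ge>Kc M. Rk \<Phi> k (fst (p, q)) (snd (p, q)) \<le> (a - 1) * \<Phi> p"
        using pp by (auto simp: Req not_less mult.commute[of "\<Phi> p"] intro!: mult_right_mono)
      have L: "\<forall>k\<ge>Kc M. (Ls \<pi> p q - 1) * \<Phi> p \<le> Lk \<Phi> k (fst (p, q)) (snd (p, q))"
      proof (intro allI impI)
        fix k assume k: "k \<ge> Kc M"
        have "Ls \<pi> p q - 1 \<le> real k * (1 - \<Phi> (p - (1 / real k) *\<^sub>R (q - p)) / \<Phi> p)"
          using Tup[OF k] by linarith
        from mult_right_mono[OF this, of "\<Phi> p"] pp
        show "(Ls \<pi> p q - 1) * \<Phi> p \<le> Lk \<Phi> k (fst (p, q)) (snd (p, q))"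
          by (simp add: Leq mult.commute)
      qed
      have "(a - 1) * \<Phi> p < (Ls \<pi> p q - 1) * \<Phi> p" using a pp by simp
      from not_kink[OF xS nk this R L] show False .
    qed
    then obtain k where k: "k \<ge> Kc M" and ak: "a < 1 + real k * (\<Phi> (p + (1 / real k) *\<^sub>R (q - p)) / \<Phi> p - 1)"
      by blast
    define xk where "xk = p + (1 / real k) *\<^sub>R (q - p)"
    have "((\<lambda>x. Ls \<pi> (fst x) p + real k * (\<Phi> xk / \<Phi> (fst x) - Ls \<pi> (fst x) p)) \<longlongrightarrow>
          1 + real k * (\<Phi> xk / \<Phi> p - 1)) F"
      using pp by (intro tendsto_intros E2 \<Phi>T) auto
    then have "eventually (\<lambda>x. a < Ls \<pi> (fst x) p + real k * (\<Phi> xk / \<Phi> (fst x) - Ls \<pi> (fst x) p)) F"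
      using ak by (intro order_tendstoD(1)) (auto simp: xk_def)
    then show "eventually (\<lambda>x. a < T x) F"
      using evS
    proof eventually_elim
      case (elim x)
      then show ?case using sup_lower[OF xS k, of "fst x"] Sx[of x] by (simp add: T_def xk_def)
    qed
  next
    fix a assume a: "Ls \<pi> p q < a"
    have "\<exists>k\<ge>Kc M. 1 + real k * (1 - \<Phi> (p - (1 / real k) *\<^sub>R (q - p)) / \<Phi> p) < a"
    proof (rule ccontr)
      assume "\<not> ?thesis"
      then have L: "\<forall>k\<ge>Kc M. (a - 1) * \<Phi> p \<le> Lk \<Phi> k (fst (p, q)) (snd (p, q))"
        using pp by (auto simp: Leq not_less mult.commute[of "\<Phi> p"] intro!: mult_right_mono)
      have R: "\<forall>k\<ge>Kc M. Rk \<Phi> k (fst (p, q)) (snd (p, q)) \<le> (Ls \<pi> p q - 1) * \<Phi> p"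
      proof (intro allI impI)
        fix k assume k: "k \<ge> Kc M"
        have "real k * (\<Phi> (p + (1 / real k) *\<^sub>R (q - p)) / \<Phi> p - 1) \<le> Ls \<pi> p q - 1"
          using Tlow[OF k] by linarith
        from mult_right_mono[OF this, of "\<Phi> p"] pp
        show "Rk \<Phi> k (fst (p, q)) (snd (p, q)) \<le> (Ls \<pi> p q - 1) * \<Phi> p"
          by (simp add: Req mult.commute)
      qed
      have "(Ls \<pi> p q - 1) * \<Phi> p < (a - 1) * \<Phi> p" using a pp by simp
      from not_kink[OF xS nk this R L] show False .
    qed
    then obtain k where k: "k \<ge> Kc M" and ak: "1 + real k * (1 - \<Phi> (p - (1 / real k) *\<^sub>R (q - p)) / \<Phi> p) < a"
      by blast
    define yk where "yk = p - (1 / real k) *\<^sub>R (q - p)"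
    have "((\<lambda>x. Ls \<pi> (fst x) p + real k * (Ls \<pi> (fst x) p - \<Phi> yk / \<Phi> (fst x))) \<longlongrightarrow>
          1 + real k * (1 - \<Phi> yk / \<Phi> p)) F"
      using pp by (intro tendsto_intros E2 \<Phi>T) auto
    then have "eventually (\<lambda>x. Ls \<pi> (fst x) p + real k * (Ls \<pi> (fst x) p - \<Phi> yk / \<Phi> (fst x)) < a) F"
      using ak by (intro order_tendstoD(2)) (auto simp: yk_def)
    then show "eventually (\<lambda>x. T x < a) F"
      using evS
    proof eventually_elim
      case (elim x)
      then show ?case using sup_upper[OF xS k, of "fst x"] Sx[of x] by (simp add: T_def yk_def)
    qed
  qed
  have "((\<lambda>x. Ls \<pi> (fst x) (snd x - q) + T x) \<longlongrightarrow> 0 + Ls \<pi> p q) F"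
    by (intro tendsto_add E1 TT)
  then have LT: "((\<lambda>x. Ls \<pi> (fst x) (snd x)) \<longlongrightarrow> Ls \<pi> p q) F"
    by (simp add: T_def Ls_diff)
  have Lpos: "Ls \<pi> p q > 0"
    using Ls_S_bounds(1)[of p q M \<pi>, OF xS Mpos pi_cs[OF ps]] Mpos by (meson less_le_trans zero_less_divide_1_iff)
  have "((\<lambda>x. ln (Ls \<pi> (fst x) (snd x))) \<longlongrightarrow> ln (Ls \<pi> p q)) F"
    using Lpos by (intro tendsto_ln LT) auto
  then show ?thesis
    unfolding continuous_within F_def S_def by (simp add: ell_Ls[abs_def])
qed

end



lemma axis_null:
  fixes H :: "'a::euclidean_space set" and e :: 'a
  assumes H: "H \<in> sets borel" and e: "e \<in> Basis"
    and cnt: "\<And>w. countable {t::real. w + t *\<^sub>R e \<in> H}"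
  shows "H \<in> null_sets lborel"
proof -
  interpret product_sigma_finite "\<lambda>_::'a. lborel :: real measure"
    by standard
  define I where "I = Basis - {e}"
  have BI: "Basis = insert e I" and eI: "e \<notin> I" and fI: "finite I" using e by (auto simp: I_def)
  define g where "g f = (\<Sum>b\<in>Basis. f b *\<^sub>R b)" for f :: "'a \<Rightarrow> real"
  have gm: "g \<in> borel_measurable (\<Pi>\<^sub>M b\<in>Basis. lborel)" unfolding g_def by measurable
  have inner0: "(\<integral>\<^sup>+ y. indicator (g -` H \<inter> space (\<Pi>\<^sub>M b\<in>insert e I. lborel)) (x(e := y)) \<partial>lborel) = 0"
    if x: "x \<in> space (\<Pi>\<^sub>M b\<in>I. lborel)" for x
  proof -
    define c where "c = (\<Sum>b\<in>I. x b *\<^sub>R b)"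
    have geq: "g (x(e := y)) = c + y *\<^sub>R e" for y
    proof -
      have "g (x(e := y)) = (x(e := y)) e *\<^sub>R e + (\<Sum>b\<in>I. (x(e := y)) b *\<^sub>R b)"
        unfolding g_def BI using fI eI by (simp add: sum.insert)
      also have "(\<Sum>b\<in>I. (x(e := y)) b *\<^sub>R b) = c"
        unfolding c_def using eI by (intro sum.cong) auto
      finally show ?thesis by (metis add.commute fun_upd_same)
    qed
    have "(\<lambda>y. indicator (g -` H \<inter> space (\<Pi>\<^sub>M b\<in>insert e I. lborel)) (x(e := y)) :: ennreal)
          = indicator {y. c + y *\<^sub>R e \<in> H}"
      using x by (auto simp: geq space_PiM PiE_def extensional_def indicator_def fun_eq_iff)
    moreover have N: "{y. c + y *\<^sub>R e \<in> H} \<in> null_sets lborel"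
      using cnt[of c] by (rule countable_imp_null_set_lborel)
    moreover have "integral\<^sup>N lborel (indicator {y. c + y *\<^sub>R e \<in> H}) = 0"
      using N by (metis nn_integral_indicator null_setsD1 null_setsD2)
    ultimately show ?thesis by simp
  qed
  have "emeasure lborel H = emeasure (distr (\<Pi>\<^sub>M b\<in>Basis. lborel) borel g) H"
  proof -
    have "g = (\<lambda>f. \<Sum>b\<in>Basis. f b *\<^sub>R b)" by (simp add: g_def fun_eq_iff)
    then show ?thesis by (subst lborel_eq) simp
  qed
  also have "\<dots> = emeasure (\<Pi>\<^sub>M b\<in>Basis. lborel) (g -` H \<inter> space (\<Pi>\<^sub>M b\<in>Basis. lborel))"
    by (rule emeasure_distr[OF gm]) (use H in simp)
  also have "\<dots> = (\<integral>\<^sup>+ f. indicator (g -` H \<inter> space (\<Pi>\<^sub>M b\<in>Basis. lborel)) f \<partial>(\<Pi>\<^sub>M b\<in>Basis. lborel))"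
    using H by (intro nn_integral_indicator[symmetric] measurable_sets[OF gm])
  also have "\<dots> = (\<integral>\<^sup>+ f. indicator (g -` H \<inter> space (\<Pi>\<^sub>M b\<in>insert e I. lborel)) f \<partial>(\<Pi>\<^sub>M b\<in>insert e I. lborel))"
    by (simp add: BI)
  also have "\<dots> = (\<integral>\<^sup>+ x. (\<integral>\<^sup>+ y. indicator (g -` H \<inter> space (\<Pi>\<^sub>M b\<in>insert e I. lborel)) (x(e := y)) \<partial>lborel) \<partial>(\<Pi>\<^sub>M b\<in>I. lborel))"
  proof (rule product_nn_integral_insert[OF fI eI])
    show "indicator (g -` H \<inter> space (\<Pi>\<^sub>M b\<in>insert e I. lborel)) \<in> borel_measurable (\<Pi>\<^sub>M b\<in>insert e I. lborel)"
      using H gm unfolding BI by (intro borel_measurable_indicator measurable_sets[where M="\<Pi>\<^sub>M b\<in>insert e I. lborel"]) auto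
  qed
  also have "\<dots> = (\<integral>\<^sup>+ x. 0 \<partial>(\<Pi>\<^sub>M b\<in>I. (lborel :: real measure)))"
    using inner0 by (intro nn_integral_cong) simp
  also have "\<dots> = 0" by simp
  finally show ?thesis using H by (simp add: null_sets_def)
qed



lemma vec_nth_fst_borel[measurable]: "(\<lambda>x::(real ^ 'n) \<times> (real ^ 'n). fst x $ i) \<in> borel_measurable borel"
  by (intro borel_measurable_continuous_onI continuous_intros)

lemma vec_nth_snd_borel[measurable]: "(\<lambda>x::(real ^ 'n) \<times> (real ^ 'n). snd x $ i) \<in> borel_measurable borel"
  by (intro borel_measurable_continuous_onI continuous_intros)

lemma S_set_borel: "(S_set M :: ((real ^ 'n) \<times> (real ^ 'n)) set) \<in> sets borel"
proof -
  have "Measurable.pred borel (\<lambda>x::(real ^ 'n) \<times> (real ^ 'n). (\<forall>i. 0 < fst x $ i) \<and> (\<Sum>i\<in>UNIV. fst x $ i) = 1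
     \<and> (\<forall>i. 0 < snd x $ i) \<and> (\<Sum>i\<in>UNIV. snd x $ i) = 1
     \<and> (\<forall>i. 1 / M \<le> snd x $ i / fst x $ i \<and> snd x $ i / fst x $ i \<le> M))"
    by measurable
  moreover have "S_set M = {x::(real ^ 'n) \<times> (real ^ 'n). (\<forall>i. 0 < fst x $ i) \<and> (\<Sum>i\<in>UNIV. fst x $ i) = 1
     \<and> (\<forall>i. 0 < snd x $ i) \<and> (\<Sum>i\<in>UNIV. snd x $ i) = 1
     \<and> (\<forall>i. 1 / M \<le> snd x $ i / fst x $ i \<and> snd x $ i / fst x $ i \<le> M)}"
    by (auto simp: S_set_def open_simplex_def)
  ultimately show ?thesis by (simp add: pred_def)
qed

lemma Rats_eq_rat: "(\<exists>a\<in>\<rat>. P a) \<longleftrightarrow> (\<exists>a::rat. P (of_rat a))"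
  by (auto simp: Rats_def)

context
  fixes \<Phi> :: "real ^ 'n \<Rightarrow> real" and M :: real
  assumes Mge: "M \<ge> 1"
    and conc: "concave_on open_simplex \<Phi>"
begin

lemma Rk_cont: "k \<ge> Kc M \<Longrightarrow> continuous_on (S_set M) (\<lambda>x. Rk \<Phi> k (fst x) (snd x))"
  unfolding Rk_def
proof (intro continuous_intros)
  assume k: "k \<ge> Kc M"
  have \<Phi>c: "continuous_on open_simplex \<Phi>" by (rule concave_continuous_simplex[OF conc])
  show "continuous_on (S_set M) (\<lambda>x. \<Phi> (fst x + (1 / real k) *\<^sub>R (snd x - fst x)))"
  proof (rule continuous_on_compose2[OF \<Phi>c])
    show "continuous_on (S_set M) (\<lambda>x. fst x + (1 / real k) *\<^sub>R (snd x - fst x))"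
      by (intro continuous_intros)
    show "(\<lambda>x. fst x + (1 / real k) *\<^sub>R (snd x - fst x)) ` S_set M \<subseteq> open_simplex"
      using S_shift(1)[of _ _ M "1 / real k"] Kc_prop[OF Mge k] Mge by fastforce
  qed
  show "continuous_on (S_set M) (\<lambda>x. \<Phi> (fst x))"
    by (rule continuous_on_compose2[OF \<Phi>c]) (auto intro!: continuous_intros simp: S_set_def)
qed

lemma Lk_cont: "k \<ge> Kc M \<Longrightarrow> continuous_on (S_set M) (\<lambda>x. Lk \<Phi> k (fst x) (snd x))"
  unfolding Lk_def
proof (intro continuous_intros)
  assume k: "k \<ge> Kc M"
  have \<Phi>c: "continuous_on open_simplex \<Phi>" by (rule concave_continuous_simplex[OF conc])
  show "continuous_on (S_set M) (\<lambda>x. \<Phi> (fst x - (1 / real k) *\<^sub>R (snd x - fst x)))"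
  proof (rule continuous_on_compose2[OF \<Phi>c])
    show "continuous_on (S_set M) (\<lambda>x. fst x - (1 / real k) *\<^sub>R (snd x - fst x))"
      by (intro continuous_intros)
    show "(\<lambda>x. fst x - (1 / real k) *\<^sub>R (snd x - fst x)) ` S_set M \<subseteq> open_simplex"
      using S_shift(2)[of _ _ M "1 / real k"] Kc_prop[OF Mge k] Mge by fastforce
  qed
  show "continuous_on (S_set M) (\<lambda>x. \<Phi> (fst x))"
    by (rule continuous_on_compose2[OF \<Phi>c]) (auto intro!: continuous_intros simp: S_set_def)
qed

lemma kinkset_borel: "kinkset \<Phi> M \<in> sets borel"
proof -
  define R' where "R' k x = (if k \<ge> Kc M then indicator (S_set M) x *\<^sub>R Rk \<Phi> k (fst x) (snd x) else 0)" for k x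
  define L' where "L' k x = (if k \<ge> Kc M then indicator (S_set M) x *\<^sub>R Lk \<Phi> k (fst x) (snd x) else 0)" for k x
  have [measurable]: "R' k \<in> borel_measurable borel" for k
  proof (cases "k \<ge> Kc M")
    case True
    then show ?thesis unfolding R'_def
      using borel_measurable_continuous_on_indicator[OF S_set_borel Rk_cont[OF True]] by simp
  qed (simp add: R'_def[abs_def])
  have [measurable]: "L' k \<in> borel_measurable borel" for k
  proof (cases "k \<ge> Kc M")
    case True
    then show ?thesis unfolding L'_def
      using borel_measurable_continuous_on_indicator[OF S_set_borel Lk_cont[OF True]] by simp
  qed (simp add: L'_def[abs_def])
  have [measurable]: "S_set M \<in> sets borel" by (rule S_set_borel)
  have "Measurable.pred borel (\<lambda>x. x \<in> S_set M \<and> (\<exists>a::rat. \<exists>b::rat. of_rat a < (of_rat b :: real) \<and>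
       (\<forall>k. Kc M \<le> k \<longrightarrow> R' k x \<le> of_rat a) \<and> (\<forall>k. Kc M \<le> k \<longrightarrow> of_rat b \<le> L' k x)))"
    by measurable
  moreover have "kinkset \<Phi> M = {x. x \<in> S_set M \<and> (\<exists>a::rat. \<exists>b::rat. of_rat a < (of_rat b :: real) \<and>
       (\<forall>k. Kc M \<le> k \<longrightarrow> R' k x \<le> of_rat a) \<and> (\<forall>k. Kc M \<le> k \<longrightarrow> of_rat b \<le> L' k x))}"
    unfolding kinkset_def Rats_eq_rat R'_def L'_def by (auto simp: indicator_def)
  ultimately show ?thesis by (simp add: pred_def)
qed

lemma kink_order:
  assumes t: "t1 < t2"
    and S1: "(c + t1 *\<^sub>R d, c + t1 *\<^sub>R d + d) \<in> S_set M"
    and S2: "(c + t2 *\<^sub>R d, c + t2 *\<^sub>R d + d) \<in> S_set M"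
    and a1: "\<forall>k\<ge>Kc M. Rk \<Phi> k (c + t1 *\<^sub>R d) (c + t1 *\<^sub>R d + d) \<le> a1"
    and b2: "\<forall>k\<ge>Kc M. b2 \<le> Lk \<Phi> k (c + t2 *\<^sub>R d) (c + t2 *\<^sub>R d + d)"
  shows "b2 \<le> a1"
proof -
  define p1 where "p1 = c + t1 *\<^sub>R d"
  define p2 where "p2 = c + t2 *\<^sub>R d"
  define h where "h = t2 - t1"
  have h: "h > 0" using t by (simp add: h_def)
  have p1: "p1 \<in> open_simplex" and p2: "p2 \<in> open_simplex" using S1 S2 by (auto simp: S_set_def p1_def p2_def)
  define k where "k = max (Kc M) (nat \<lceil>1 / h\<rceil> + 1)"
  have kK: "k \<ge> Kc M" by (simp add: k_def)
  have kpos: "real k > 0" using Kc_prop[OF Mge kK] by simp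
  have kh: "real k * h \<ge> 1"
  proof -
    have "real k \<ge> real (nat \<lceil>1 / h\<rceil> + 1)" unfolding k_def by linarith
    moreover have "real (nat \<lceil>1 / h\<rceil> + 1) \<ge> 1 / h" by linarith
    ultimately have "real k \<ge> 1 / h" by linarith
    then show ?thesis using h by (simp add: field_simps)
  qed
  define l where "l = 1 / (real k * h)"
  have l: "0 \<le> l" "l \<le> 1" using kh h kpos by (auto simp: l_def)
  have dd: "p2 - p1 = h *\<^sub>R d" by (simp add: p1_def p2_def h_def algebra_simps)
  have ld: "l *\<^sub>R (h *\<^sub>R d) = (1 / real k) *\<^sub>R d" using h by (simp add: l_def)
  have e1: "(1 - l) *\<^sub>R p1 + l *\<^sub>R p2 = p1 + (1 / real k) *\<^sub>R (p1 + d - p1)"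
  proof -
    have "(1 - l) *\<^sub>R p1 + l *\<^sub>R p2 = p1 + l *\<^sub>R (p2 - p1)" by (simp add: algebra_simps)
    also have "\<dots> = p1 + (1 / real k) *\<^sub>R d" using ld dd by simp
    finally show ?thesis by simp
  qed
  have e2: "(1 - l) *\<^sub>R p2 + l *\<^sub>R p1 = p2 - (1 / real k) *\<^sub>R (p2 + d - p2)"
  proof -
    have "(1 - l) *\<^sub>R p2 + l *\<^sub>R p1 = p2 - l *\<^sub>R (p2 - p1)" by (simp add: algebra_simps)
    also have "\<dots> = p2 - (1 / real k) *\<^sub>R d" using ld dd by simp
    finally show ?thesis by simp
  qed
  have c1: "\<Phi> (p1 + (1 / real k) *\<^sub>R (p1 + d - p1)) \<ge> (1 - l) * \<Phi> p1 + l * \<Phi> p2"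
    using concave_onD[OF conc l p1 p2] e1 by simp
  have c2: "\<Phi> (p2 - (1 / real k) *\<^sub>R (p2 + d - p2)) \<ge> (1 - l) * \<Phi> p2 + l * \<Phi> p1"
    using concave_onD[OF conc l p2 p1] e2 by simp
  have kl: "real k * l = 1 / h" using kpos h by (simp add: l_def)
  have "Rk \<Phi> k p1 (p1 + d) \<ge> real k * (l * (\<Phi> p2 - \<Phi> p1))"
    unfolding Rk_def using c1 kpos by (intro mult_left_mono) (auto simp: algebra_simps)
  moreover have "Lk \<Phi> k p2 (p2 + d) \<le> real k * (l * (\<Phi> p2 - \<Phi> p1))"
    unfolding Lk_def using c2 kpos by (intro mult_left_mono) (auto simp: algebra_simps)
  moreover have "Rk \<Phi> k p1 (p1 + d) \<le> a1" using a1 kK by (simp add: p1_def)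
  moreover have "b2 \<le> Lk \<Phi> k p2 (p2 + d)" using b2 kK by (simp add: p2_def)
  ultimately show ?thesis by linarith
qed

lemma kink_line_countable: "countable {t::real. (c + t *\<^sub>R d, c + t *\<^sub>R d + d) \<in> kinkset \<Phi> M}"
proof -
  define T where "T = {t::real. (c + t *\<^sub>R d, c + t *\<^sub>R d + d) \<in> kinkset \<Phi> M}"
  define W where "W t ab \<longleftrightarrow> fst ab \<in> \<rat> \<and> snd ab \<in> \<rat> \<and> fst ab < snd ab
     \<and> (\<forall>k\<ge>Kc M. Rk \<Phi> k (c + t *\<^sub>R d) (c + t *\<^sub>R d + d) \<le> fst ab)
     \<and> (\<forall>k\<ge>Kc M. snd ab \<le> Lk \<Phi> k (c + t *\<^sub>R d) (c + t *\<^sub>R d + d))" for t and ab :: "real \<times> real"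
  define w where "w t = (SOME ab. W t ab)" for t
  have Tin: "t \<in> T \<Longrightarrow> (c + t *\<^sub>R d, c + t *\<^sub>R d + d) \<in> S_set M" for t
    by (auto simp: T_def kinkset_def)
  have Wex: "t \<in> T \<Longrightarrow> W t (w t)" for t
    unfolding w_def by (rule someI_ex) (auto simp: T_def kinkset_def W_def)
  have inj: "inj_on w T"
  proof (rule inj_onI)
    fix t1 t2 assume t1: "t1 \<in> T" and t2: "t2 \<in> T" and eq: "w t1 = w t2"
    show "t1 = t2"
    proof (rule ccontr)
      assume "t1 \<noteq> t2"
      then consider "t1 < t2" | "t2 < t1" by linarith
      then show False
      proof cases
        case 1
        have "snd (w t2) \<le> fst (w t1)"
          using kink_order[OF 1 Tin[OF t1] Tin[OF t2]] Wex[OF t1] Wex[OF t2] by (simp add: W_def)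
        then show False using Wex[OF t1] eq by (simp add: W_def)
      next
        case 2
        have "snd (w t1) \<le> fst (w t2)"
          using kink_order[OF 2 Tin[OF t2] Tin[OF t1]] Wex[OF t1] Wex[OF t2] by (simp add: W_def)
        then show False using Wex[OF t1] eq by (simp add: W_def)
      qed
    qed
  qed
  have "w ` T \<subseteq> \<rat> \<times> \<rat>"
  proof
    fix ab assume "ab \<in> w ` T"
    then obtain t where "t \<in> T" "ab = w t" by blast
    moreover have "fst (w t) \<in> \<rat>" "snd (w t) \<in> \<rat>" using Wex[OF \<open>t \<in> T\<close>] by (auto simp: W_def)
    ultimately show "ab \<in> \<rat> \<times> \<rat>" by (simp add: mem_Times_iff)
  qed
  moreover have "countable (\<rat> \<times> (\<rat> :: real set))" by (intro countable_SIGMA countable_rat)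
  ultimately have "countable (w ` T)" using countable_subset by blast
  then have "countable T" using inj by (rule countable_image_inj_on)
  then show ?thesis by (simp add: T_def)
qed

end



lemma null_lborel_negligible: "N \<in> null_sets lborel \<Longrightarrow> negligible N"
  by (simp add: negligible_iff_null_sets null_sets_completionI)

lemma dir_null:
  fixes G :: "(real ^ 'n) set" and d :: "real ^ 'n"
  assumes G: "G \<in> sets borel" and d: "d \<noteq> 0" and cnt: "\<And>w. countable {t::real. w + t *\<^sub>R d \<in> G}"
  shows "G \<in> null_sets lborel"
proof -
  obtain i where di: "d $ i \<noteq> 0" using d by (metis vec_eq_iff zero_index)
  define e :: "real ^ 'n" where "e = axis i 1"
  define d' where "d' = (1 / d $ i) *\<^sub>R d"
  have d'i: "d' $ i = 1" using di by (simp add: d'_def)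
  have ei: "e $ i = 1" by (simp add: e_def axis_def)
  define T where "T w = w + (w $ i) *\<^sub>R (d' - e)" for w :: "real ^ 'n"
  define Ti where "Ti v = v - (v $ i) *\<^sub>R (d' - e)" for v :: "real ^ 'n"
  have Ti_i: "(Ti v) $ i = v $ i" for v by (simp add: Ti_def d'i ei)
  have TTi: "T (Ti v) = v" for v by (simp add: T_def Ti_i) (simp add: Ti_def)
  have linT: "linear T" unfolding T_def by (intro linearI) (auto simp: algebra_simps)
  have Tc: "continuous_on UNIV T" unfolding T_def by (intro continuous_intros)
  define H where "H = T -` G"
  have H: "H \<in> sets borel"
    unfolding H_def using measurable_sets_borel[OF borel_measurable_continuous_onI[OF Tc] G] .
  have Te: "T (w + t *\<^sub>R e) = T w + t *\<^sub>R d'" for w t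
    by (simp add: T_def ei algebra_simps)
  have cntH: "countable {t. w + t *\<^sub>R e \<in> H}" for w
  proof -
    have "{t. w + t *\<^sub>R e \<in> H} \<subseteq> (\<lambda>s. s * d $ i) ` {s. T w + s *\<^sub>R d \<in> G}"
    proof
      fix t assume "t \<in> {t. w + t *\<^sub>R e \<in> H}"
      then have "T w + t *\<^sub>R d' \<in> G" by (simp add: H_def Te)
      then have "T w + (t / d $ i) *\<^sub>R d \<in> G" by (simp add: d'_def)
      moreover have "t = (t / d $ i) * d $ i" using di by simp
      ultimately show "t \<in> (\<lambda>s. s * d $ i) ` {s. T w + s *\<^sub>R d \<in> G}" by blast
    qed
    then show ?thesis using countable_image[OF cnt[of "T w"]] countable_subset by blast
  qed
  have e: "e \<in> Basis" by (simp add: e_def)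
  have "H \<in> null_sets lborel" by (rule axis_null[OF H e cntH])
  then have negH: "negligible H" by (rule null_lborel_negligible)
  have GT: "G = T ` H"
  proof
    show "G \<subseteq> T ` H"
    proof
      fix v assume "v \<in> G"
      then have "Ti v \<in> H" by (simp add: H_def TTi)
      then show "v \<in> T ` H" using TTi[of v] by (metis image_eqI)
    qed
    show "T ` H \<subseteq> G" by (auto simp: H_def)
  qed
  have "negligible G"
    unfolding GT by (rule negligible_differentiable_image_negligible[OF order_refl negH linear_imp_differentiable_on[OF linT]])
  then have "G \<in> null_sets lebesgue" by (simp add: negligible_iff_null_sets)
  then show ?thesis using G null_sets_completion_iff[of G lborel] by simp
qed

definition ctr :: "real ^ 'n \<Rightarrow> real ^ 'n" where
  "ctr x = x - ((sigma x - 1) / real CARD('n)) *\<^sub>R ones_vec"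

definition dz :: "real ^ 'n \<Rightarrow> real ^ 'n" where
  "dz z = z - (sigma z / real CARD('n)) *\<^sub>R ones_vec"

lemma sigma_ones: "sigma (ones_vec :: real ^ 'n) = real CARD('n)"
  by (simp add: sigma_def ones_vec_def)

lemma ctr_add: "ctr (x + z) = ctr x + dz (z :: real ^ 'n)"
proof -
  have e: "(sigma x + sigma z - 1) / real CARD('n) = (sigma x - 1) / real CARD('n) + sigma z / real CARD('n)"
    by (simp add: add_divide_distrib diff_divide_distrib)
  show ?thesis unfolding ctr_def dz_def sigma_add e scaleR_add_left by simp
qed

lemma sigma_dz: "sigma (dz (z :: real ^ 'n)) = 0"
  by (simp add: dz_def sigma_diff sigma_scale sigma_ones)

lemma ctr_line: "sigma d = 0 \<Longrightarrow> ctr (x + t *\<^sub>R d) = ctr x + t *\<^sub>R (d :: real ^ 'n)"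
  by (simp add: ctr_def sigma_add sigma_scale algebra_simps)

lemma ctr_simplex: "p \<in> open_simplex \<Longrightarrow> ctr (p + s *\<^sub>R ones_vec) = (p :: real ^ 'n)"
  by (simp add: ctr_def sigma_add sigma_scale sigma_ones open_simplex_posorth)

lemma ctr_cont: "continuous_on UNIV (ctr :: real ^ 'n \<Rightarrow> real ^ 'n)"
  unfolding ctr_def[abs_def] sigma_def by (intro continuous_intros) simp

lemma ctr_borel[measurable]: "(ctr :: real ^ 'n \<Rightarrow> real ^ 'n) \<in> borel_measurable borel"
  by (rule borel_measurable_continuous_onI[OF ctr_cont])

context
  fixes \<Phi> :: "real ^ 'n \<Rightarrow> real" and M :: real
  assumes Mge: "M \<ge> 1"
    and conc: "concave_on open_simplex \<Phi>"
begin

lemma diag_not_kink: "(p, p) \<notin> kinkset \<Phi> M"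
proof
  assume "(p, p) \<in> kinkset \<Phi> M"
  then obtain a b where ab: "a < b" "\<forall>k\<ge>Kc M. Rk \<Phi> k p p \<le> a" "\<forall>k\<ge>Kc M. b \<le> Lk \<Phi> k p p"
    by (auto simp: kinkset_def)
  have "Rk \<Phi> (Kc M) p p = 0" "Lk \<Phi> (Kc M) p p = 0" by (simp_all add: Rk_def Lk_def)
  then show False using ab by force
qed

lemma thicken_kink_negligible: "negligible (thicken (kinkset \<Phi> M :: ((real ^ 'n) \<times> (real ^ 'n)) set))"
proof -
  define B where "B = (kinkset \<Phi> M :: ((real ^ 'n) \<times> (real ^ 'n)) set)"
  have B[measurable]: "B \<in> sets borel" unfolding B_def by (rule kinkset_borel[OF Mge conc])
  define F where "F = {zx :: (real ^ 'n) \<times> (real ^ 'n). (ctr (snd zx), ctr (snd zx + fst zx)) \<in> B}"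
  have Fm: "F \<in> sets borel"
  proof -
    have "(\<lambda>zx :: (real ^ 'n) \<times> (real ^ 'n). (ctr (snd zx), ctr (snd zx + fst zx))) \<in> borel_measurable borel"
      by (intro borel_measurable_continuous_onI continuous_intros continuous_on_compose2[OF ctr_cont]) auto
    from measurable_sets_borel[OF this B] show ?thesis by (simp add: F_def vimage_def)
  qed
  have sec: "Pair z -` F \<in> null_sets lborel" for z
  proof (cases "dz z = 0")
    case True
    then have "Pair z -` F = {}" by (auto simp: F_def ctr_add B_def diag_not_kink)
    then show ?thesis by simp
  next
    case False
    show ?thesis
    proof (rule dir_null[OF _ False])
      show "Pair z -` F \<in> sets borel"
      proof -
        have "(\<lambda>x :: real ^ 'n. (z, x)) \<in> borel_measurable borel"
          by (intro borel_measurable_continuous_onI continuous_intros)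
        from measurable_sets_borel[OF this Fm] show ?thesis by (simp add: vimage_def)
      qed
    next
      fix w
      have "{t. w + t *\<^sub>R dz z \<in> Pair z -` F} =
        {t. (ctr w + t *\<^sub>R dz z, ctr w + t *\<^sub>R dz z + dz z) \<in> kinkset \<Phi> M}"
      proof -
        have l1: "ctr (w + t *\<^sub>R dz z) = ctr w + t *\<^sub>R dz z" for t by (rule ctr_line[OF sigma_dz])
        have l2: "ctr (w + t *\<^sub>R dz z + z) = ctr w + t *\<^sub>R dz z + dz z" for t
          using ctr_add[of "w + t *\<^sub>R dz z" z] l1 by simp
        show ?thesis by (auto simp: F_def B_def l1 l2)
      qed
      then show "countable {t. w + t *\<^sub>R dz z \<in> Pair z -` F}"
        using kink_line_countable[OF Mge conc] by simp
    qed
  qed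
  have "emeasure lborel F = emeasure (lborel \<Otimes>\<^sub>M lborel) F" by (simp add: lborel_prod)
  also have "\<dots> = (\<integral>\<^sup>+ z. emeasure lborel (Pair z -` F) \<partial>lborel)"
  proof (intro lborel.emeasure_pair_measure_alt)
    have "sets (lborel \<Otimes>\<^sub>M lborel) = sets (borel :: ((real ^ 'n) \<times> (real ^ 'n)) measure)"
      by (simp only: lborel_prod sets_lborel)
    then show "F \<in> sets (lborel \<Otimes>\<^sub>M lborel)" using Fm by simp
  qed
  also have "\<dots> = (\<integral>\<^sup>+ z. 0 \<partial>(lborel :: (real ^ 'n) measure))"
    using sec by (intro nn_integral_cong) (simp add: null_setsD1)
  also have "\<dots> = 0" by simp
  finally have "F \<in> null_sets lborel" using Fm by (simp add: null_sets_def)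
  then have negF: "negligible F" by (rule null_lborel_negligible)
  define \<Lambda> where "\<Lambda> zx = (snd zx, snd zx + fst zx)" for zx :: "(real ^ 'n) \<times> (real ^ 'n)"
  have lin: "linear \<Lambda>" unfolding \<Lambda>_def by (intro linearI) (auto simp: algebra_simps)
  have "negligible (\<Lambda> ` F)"
    by (rule negligible_differentiable_image_negligible[OF order_refl negF linear_imp_differentiable_on[OF lin]])
  moreover have "thicken B \<subseteq> \<Lambda> ` F"
  proof
    fix xy assume "xy \<in> thicken B"
    then obtain p q s r where pq: "(p, q) \<in> B" and xy: "xy = (p + s *\<^sub>R ones_vec, q + r *\<^sub>R ones_vec)"
      by (auto simp: thicken_def)
    have ps: "p \<in> open_simplex" "q \<in> open_simplex" using pq by (auto simp: B_def kinkset_def S_set_def)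
    define x where "x = p + s *\<^sub>R ones_vec"
    define y where "y = q + r *\<^sub>R ones_vec"
    have "(y - x, x) \<in> F" using pq ctr_simplex[OF ps(1), of s] ctr_simplex[OF ps(2), of r]
      by (simp add: F_def x_def y_def)
    moreover have "\<Lambda> (y - x, x) = xy" by (simp add: \<Lambda>_def xy x_def y_def)
    ultimately show "xy \<in> \<Lambda> ` F" by force
  qed
  ultimately show ?thesis unfolding B_def using negligible_subset by blast
qed

end



lemma emp_integrable:
  assumes "t > 0"
  shows "integrable (emp_measure \<mu> t) (h :: _ \<Rightarrow> real)"
  unfolding emp_measure_def using assms
  by (intro integrable_measure_pmf_finite) (auto simp: set_pmf_of_set lessThan_empty_iff)

lemma emp_integral:
  assumes "t > 0"
  shows "integral\<^sup>L (emp_measure \<mu> t) (h :: _ \<Rightarrow> real) = (\<Sum>s<t. h (\<mu> s, \<mu> (Suc s))) / real t"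
  unfolding emp_measure_def using assms by (subst integral_map_pmf, subst integral_pmf_of_set) (auto simp: lessThan_empty_iff)

theorem lemma4p9:
  fixes \<mu> :: "nat \<Rightarrow> real ^ 'n" and M :: real
    and P :: "((real ^ 'n) \<times> (real ^ 'n)) measure"
  assumes n2: "CARD('n) \<ge> 2"
    and mu_simplex: "\<forall>t. \<mu> t \<in> open_simplex"
    and M_pos: "M > 0"
    and mu_ratio: "\<forall>t i. 1 / M \<le> \<mu> (Suc t) $ i / \<mu> t $ i \<and> \<mu> (Suc t) $ i / \<mu> t $ i \<le> M"
    and P_prob: "prob_space P"
    and P_borel: "sets P = sets borel"
    and P_on_S: "emeasure P (S_set M) = 1"
    and P_ac: "simplex_abs_cont P"
    and weak: "weak_conv_on (S_set M) (emp_measure \<mu>) P"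
  shows "\<forall>\<pi>\<in>FG. \<exists>W.
           (\<lambda>t. ln (rel_value \<pi> \<mu> t) / real t) \<longlonglongrightarrow> W
         \<and> (\<lambda>t. set_lebesgue_integral (emp_measure \<mu> t) (S_set M) (ell \<pi>)) \<longlonglongrightarrow> W
         \<and> set_integrable (completion P) (S_set M) (ell \<pi>)
         \<and> W = set_lebesgue_integral (completion P) (S_set M) (ell \<pi>)"
proof
  fix \<pi> :: "real ^ 'n \<Rightarrow> real ^ 'n" assume "\<pi> \<in> FG"
  then obtain \<Phi> where pi_cs: "\<And>p. p \<in> open_simplex \<Longrightarrow> \<pi> p \<in> closed_simplex"
    and conc: "concave_on open_simplex \<Phi>" and \<Phi>pos: "\<And>p. p \<in> open_simplex \<Longrightarrow> \<Phi> p > 0"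
    and supg0: "\<And>p q. p \<in> open_simplex \<Longrightarrow> q \<in> open_simplex \<Longrightarrow> (\<Sum>i\<in>UNIV. \<pi> p $ i * q $ i / p $ i) \<ge> \<Phi> q / \<Phi> p"
    unfolding FG_def by blast
  have supg: "\<And>p q. p \<in> open_simplex \<Longrightarrow> q \<in> open_simplex \<Longrightarrow> Ls \<pi> p q \<ge> \<Phi> q / \<Phi> p"
    using supg0 by (simp add: Ls_def)
  have Mge: "M \<ge> 1"
  proof -
    obtain i :: 'n where True by blast
    have "1 / M \<le> M" using mu_ratio[rule_format, of 0 i] by linarith
    then have "1 \<le> M * M" using M_pos by (simp add: field_simps)
    then show ?thesis using M_pos by (metis less_one mult_le_cancel_left1 not_le order.strict_trans)
  qed
  have ellLs: "ell \<pi> x = ln (Ls \<pi> (fst x) (snd x))" for x by (simp add: ell_def Ls_def)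
  define S where "S = (S_set M :: ((real ^ 'n) \<times> (real ^ 'n)) set)"
  define B where "B = (kinkset \<Phi> M :: ((real ^ 'n) \<times> (real ^ 'n)) set)"
  have Bb: "B \<in> sets borel" unfolding B_def by (rule kinkset_borel[OF Mge conc])
  have BS: "B \<subseteq> open_simplex \<times> open_simplex" by (auto simp: B_def kinkset_def S_set_def)
  have "thicken B \<in> null_sets lebesgue"
    using thicken_kink_negligible[OF Mge conc] by (simp add: B_def negligible_iff_null_sets)
  then have PB0: "emeasure P B = 0" using P_ac Bb BS unfolding simplex_abs_cont_def by blast
  have BnP: "B \<in> null_sets P" using PB0 Bb P_borel by (simp add: null_sets_def)
  have cont: "AE x in P. x \<in> S \<longrightarrow> continuous (at x within S) (ell \<pi>)"
    using AE_not_in[OF BnP]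
  proof eventually_elim
    case (elim x)
    show ?case
    proof
      assume "x \<in> S"
      then show "continuous (at x within S) (ell \<pi>)"
        using ell_cont[OF Mge pi_cs conc \<Phi>pos supg, of "fst x" "snd x"] elim
        by (simp add: S_def B_def)
    qed
  qed
  have bnd: "\<bar>ell \<pi> x\<bar> \<le> ln M" if "x \<in> S" for x
  proof -
    obtain p q where x: "x = (p, q)" by force
    have xs: "(p, q) \<in> S_set M" using that x by (simp add: S_def)
    have ps: "p \<in> open_simplex" using xs by (simp add: S_set_def)
    have l: "1 / M \<le> Ls \<pi> p q" "Ls \<pi> p q \<le> M"
      using Ls_S_bounds[of p q M \<pi>, OF xs M_pos pi_cs[OF ps]] by auto
    have lp: "Ls \<pi> p q > 0" using l(1) M_pos by (meson less_le_trans zero_less_divide_1_iff)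
    have "ln (Ls \<pi> p q) \<le> ln M" using l(2) lp by simp
    moreover have "ln (1 / M) \<le> ln (Ls \<pi> p q)" using l(1) M_pos lp by (subst ln_le_cancel_iff) auto
    moreover have "ln (1 / M) = - ln M" using M_pos by (simp add: ln_div)
    ultimately show ?thesis by (simp add: x ellLs abs_le_iff)
  qed
  have fin: "finite_measure P" using P_prob unfolding prob_space_def by blast
  have intg: "eventually (\<lambda>t. \<forall>h::_\<Rightarrow>real. integrable (emp_measure \<mu> t) h) sequentially"
    using eventually_gt_at_top[of 0] by eventually_elim (auto intro: emp_integrable)
  have main: "set_integrable (completion P) S (ell \<pi>) \<and>
    (\<lambda>t. set_lebesgue_integral (emp_measure \<mu> t) S (ell \<pi>)) \<longlonglongrightarrow> set_lebesgue_integral (completion P) S (ell \<pi>)"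
  proof -
    have SB: "S \<in> sets borel" unfolding S_def by (rule S_set_borel)
    show ?thesis by (rule weak_conv_ae[OF weak[folded S_def] SB P_borel fin bnd cont intg])
  qed
  define W where "W = set_lebesgue_integral (completion P) S (ell \<pi>)"
  have gS: "(\<mu> s, \<mu> (Suc s)) \<in> S" for s
    using mu_simplex mu_ratio by (simp add: S_def S_set_def)
  have Lpos: "Ls \<pi> (\<mu> s) (\<mu> (Suc s)) > 0" for s
  proof -
    have xs: "(\<mu> s, \<mu> (Suc s)) \<in> S_set M" using gS by (simp add: S_def)
    have "1 / M \<le> Ls \<pi> (\<mu> s) (\<mu> (Suc s))"
      using Ls_S_bounds(1)[of "\<mu> s" "\<mu> (Suc s)" M \<pi>, OF xs M_pos pi_cs] mu_simplex by auto
    then show ?thesis using M_pos by (meson less_le_trans zero_less_divide_1_iff)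
  qed
  have rv: "rel_value \<pi> \<mu> t > 0 \<and> ln (rel_value \<pi> \<mu> t) = (\<Sum>s<t. ell \<pi> (\<mu> s, \<mu> (Suc s)))" for t
  proof (induction t)
    case 0 then show ?case by simp
  next
    case (Suc t)
    have eq: "rel_value \<pi> \<mu> (Suc t) = rel_value \<pi> \<mu> t * Ls \<pi> (\<mu> t) (\<mu> (Suc t))"
      by (simp add: Ls_def)
    show ?case unfolding eq using Suc Lpos[of t] by (simp add: ln_mult ellLs del: rel_value.simps)
  qed
  have eqn: "eventually (\<lambda>t. set_lebesgue_integral (emp_measure \<mu> t) S (ell \<pi>) = ln (rel_value \<pi> \<mu> t) / real t) sequentially"
    using eventually_gt_at_top[of 0]
  proof eventually_elim
    case (elim t)
    have "set_lebesgue_integral (emp_measure \<mu> t) S (ell \<pi>) = (\<Sum>s<t. indicator S (\<mu> s, \<mu> (Suc s)) *\<^sub>R ell \<pi> (\<mu> s, \<mu> (Suc s))) / real t"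
      unfolding set_lebesgue_integral_def by (rule emp_integral[OF elim])
    also have "\<dots> = (\<Sum>s<t. ell \<pi> (\<mu> s, \<mu> (Suc s))) / real t" using gS by simp
    finally show ?case using rv[of t] by simp
  qed
  have L2: "(\<lambda>t. set_lebesgue_integral (emp_measure \<mu> t) S (ell \<pi>)) \<longlonglongrightarrow> W"
    using main by (simp add: W_def)
  have L1: "(\<lambda>t. ln (rel_value \<pi> \<mu> t) / real t) \<longlonglongrightarrow> W"
    by (rule Lim_transform_eventually[OF L2 eqn])
  show "\<exists>W. (\<lambda>t. ln (rel_value \<pi> \<mu> t) / real t) \<longlonglongrightarrow> W
         \<and> (\<lambda>t. set_lebesgue_integral (emp_measure \<mu> t) (S_set M) (ell \<pi>)) \<longlonglongrightarrow> W
         \<and> set_integrable (completion P) (S_set M) (ell \<pi>)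
         \<and> W = set_lebesgue_integral (completion P) (S_set M) (ell \<pi>)"
    using L1 L2 main by (intro exI[of _ W]) (simp add: W_def S_def)
qed


end
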